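(* Let $k$ be a field of characteristic $0$, $\phi\in k(x)$ a nonconstant rational function and $n\ge1$. Suppose that the dynatomic polynomial $\Phi_{n,\phi}$ has nonzero discriminant. Then the dynatomic group $G_{n,\phi}$ is the Galois group of $\Phi_{n,\phi}$ over $k$.
   Context: For each $d\ge1$ write $\phi^d=p_d/q_d$ with $p_d,q_d\in k[x]$ coprime ($\phi^d$ the $d$-fold composition). The $n$th dynatomic polynomial is $\Phi_{n,\phi}=\prod_{d\mid n}(x\,q_d-p_d)^{\mu(n/d)}$, $\mu$ the Möbius function; it is a polynomial in $k[x]$. A point $P\in\mathbb{P}^1(\bar k)$ is $n$-periodic if $\phi^n(P)=P$ with $n$ minimal. The $n$th dynatomic field $k_{n,\phi}$ is the compositum of the fields of definition $k(P)$ of all $n$-periodic points $P\in\mathbb{P}^1(\bar k)$ (with $k(\infty)=k$), and $G_{n,\phi}=\operatorname{Gal}(k_{n,\phi}/k)$. *)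

theory Defs
  imports "HOL-Algebra.Algebraic_Closure_Type" "Subresultants.Resultant_Prelim"
    "HOL-Computational_Algebra.Squarefree"
begin

definition moebius_mu :: "nat \<Rightarrow> int" where
  "moebius_mu n = (if squarefree n then (-1) ^ card (prime_factors n) else 0)"

definition poly_discriminant :: "'a :: field poly \<Rightarrow> 'a" where
  "poly_discriminant f =
     (-1) ^ (degree f * (degree f - 1) div 2) * resultant f (pderiv f) / lead_coeff f"

definition rat_const :: "'a :: field \<Rightarrow> 'a poly fract" where
  "rat_const c = to_fract [:c:]"

definition rat_X :: "'a :: field poly fract" where
  "rat_X = to_fract [:0, 1:]"

definition rat_subst :: "'a :: field poly \<Rightarrow> 'a poly \<Rightarrow> 'a poly fract \<Rightarrow> 'a poly fract" where
  "rat_subst p q g = poly (map_poly rat_const p) g / poly (map_poly rat_const q) g"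

definition rat_iter :: "'a :: field poly \<Rightarrow> 'a poly \<Rightarrow> nat \<Rightarrow> 'a poly fract" where
  "rat_iter p q d = (rat_subst p q ^^ d) rat_X"

definition nonconst_ratfun :: "'a :: field poly \<Rightarrow> 'a poly \<Rightarrow> bool" where
  "nonconst_ratfun p q \<longleftrightarrow> q \<noteq> 0 \<and> coprime p q \<and> (degree p \<ge> 1 \<or> degree q \<ge> 1)"

definition iterate_reps :: "'a :: field poly \<Rightarrow> 'a poly \<Rightarrow> (nat \<Rightarrow> 'a poly) \<Rightarrow> (nat \<Rightarrow> 'a poly) \<Rightarrow> bool" where
  "iterate_reps p q pd qd \<longleftrightarrow>
     (\<forall>d\<ge>1. qd d \<noteq> 0 \<and> coprime (pd d) (qd d) \<and>
             to_fract (pd d) / to_fract (qd d) = rat_iter p q d)"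

text \<open>The n-th dynatomic polynomial: prod over d | n of (x q_d - p_d)^mu(n/d),
  computed in k(x); it is a polynomial, and we take that polynomial.\<close>
definition dynatomic_fract :: "(nat \<Rightarrow> 'a :: field poly) \<Rightarrow> (nat \<Rightarrow> 'a poly) \<Rightarrow> nat \<Rightarrow> 'a poly fract" where
  "dynatomic_fract pd qd n =
     (\<Prod>d\<in>{d. d dvd n}. to_fract ([:0, 1:] * qd d - pd d) powi moebius_mu (n div d))"

definition dynatomic_poly :: "(nat \<Rightarrow> 'a :: field poly) \<Rightarrow> (nat \<Rightarrow> 'a poly) \<Rightarrow> nat \<Rightarrow> 'a poly" where
  "dynatomic_poly pd qd n = (THE P. to_fract P = dynatomic_fract pd qd n)"

text \<open>P^1(kbar) = kbar option, None being the point at infinity.\<close>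
definition phi_P1 :: "'a :: field poly \<Rightarrow> 'a poly \<Rightarrow> 'a alg_closure option \<Rightarrow> 'a alg_closure option" where
  "phi_P1 p q P = (case P of
      Some a \<Rightarrow> (if poly (map_poly to_ac q) a \<noteq> 0
                 then Some (poly (map_poly to_ac p) a / poly (map_poly to_ac q) a)
                 else None)
    | None \<Rightarrow> (if degree p > degree q then None
              else Some (to_ac (coeff p (degree q) / lead_coeff q))))"

definition periodic_point :: "'a :: field poly \<Rightarrow> 'a poly \<Rightarrow> nat \<Rightarrow> 'a alg_closure option \<Rightarrow> bool" where
  "periodic_point p q n P \<longleftrightarrow> n \<ge> 1 \<and> (phi_P1 p q ^^ n) P = P \<and>
      (\<forall>m. 1 \<le> m \<and> m < n \<longrightarrow> (phi_P1 p q ^^ m) P \<noteq> P)"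

definition is_subfield :: "'a :: field set \<Rightarrow> bool" where
  "is_subfield F \<longleftrightarrow> 0 \<in> F \<and> 1 \<in> F \<and>
     (\<forall>x\<in>F. \<forall>y\<in>F. x + y \<in> F \<and> x * y \<in> F) \<and>
     (\<forall>x\<in>F. - x \<in> F \<and> inverse x \<in> F)"

definition gen_field :: "'a :: field set \<Rightarrow> 'a set" where
  "gen_field S = \<Inter> {F. is_subfield F \<and> S \<subseteq> F}"

definition base_field :: "'a :: field alg_closure set" where
  "base_field = range to_ac"

definition field_of_def :: "'a :: field alg_closure option \<Rightarrow> 'a alg_closure set" where
  "field_of_def P = (case P of None \<Rightarrow> gen_field base_field
                             | Some a \<Rightarrow> gen_field (insert a base_field))"

definition dynatomic_field :: "'a :: field poly \<Rightarrow> 'a poly \<Rightarrow> nat \<Rightarrow> 'a alg_closure set" where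
  "dynatomic_field p q n =
     gen_field (base_field \<union> \<Union> {field_of_def P | P. periodic_point p q n P})"

definition k_automorphisms :: "'a :: field alg_closure set \<Rightarrow> ('a alg_closure \<Rightarrow> 'a alg_closure) set" where
  "k_automorphisms L = {\<sigma>. \<sigma> \<in> extensional L \<and> bij_betw \<sigma> L L \<and>
      (\<forall>x\<in>L. \<forall>y\<in>L. \<sigma> (x + y) = \<sigma> x + \<sigma> y \<and> \<sigma> (x * y) = \<sigma> x * \<sigma> y) \<and>
      (\<forall>c. \<sigma> (to_ac c) = to_ac c)}"

definition galois_group :: "'a :: field alg_closure set \<Rightarrow> ('a alg_closure \<Rightarrow> 'a alg_closure) monoid" where
  "galois_group L = \<lparr> carrier = k_automorphisms L,
                      monoid.mult = (\<lambda>\<sigma> \<tau>. restrict (\<sigma> \<circ> \<tau>) L),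
                      monoid.one = restrict id L \<rparr>"

definition splitting_field :: "'a :: field poly \<Rightarrow> 'a alg_closure set" where
  "splitting_field f = gen_field (base_field \<union> {x. poly (map_poly to_ac f) x = 0})"

definition poly_galois_group :: "'a :: field poly \<Rightarrow> ('a alg_closure \<Rightarrow> 'a alg_closure) monoid" where
  "poly_galois_group f = galois_group (splitting_field f)"

end

theory Submission
  imports Defs "HOL-Computational_Algebra.Polynomial_FPS" "Subresultants.Subresultant_Gcd"
begin

notation fps_nth (infixl "\<currency>" 75)

primrec fit :: "'a::field fps \<Rightarrow> nat \<Rightarrow> 'a fps" where
  "fit G 0 = fps_X"
| "fit G (Suc j) = fit G j oo G"

lemma fit_0: "G \<currency> 0 = 0 \<Longrightarrow> fit G j \<currency> 0 = 0"
  by (induction j) auto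

lemma compose_nth_1: "G \<currency> 0 = 0 \<Longrightarrow> (F oo G) \<currency> 1 = F \<currency> 1 * G \<currency> 1"
  by (simp add: fps_compose_nth numeral_2_eq_2)

lemma compose_nth_2:
  fixes F G :: "'a::field fps"
  assumes "G \<currency> 0 = 0"
  shows "(F oo G) \<currency> 2 = F \<currency> 1 * G \<currency> 2 + F \<currency> 2 * (G \<currency> 1)^2"
proof -
  have "(G^2) \<currency> 2 = (G \<currency> 1)^2" using assms
    by (simp add: power2_eq_square fps_mult_nth numeral_2_eq_2 atLeast0AtMost atMost_Suc)
  moreover have "(G^1) \<currency> 2 = G \<currency> 2" by simp
  ultimately show ?thesis using assms
    by (simp add: fps_compose_nth numeral_2_eq_2 atLeast0AtMost atMost_Suc)
qed

lemma fit_1: "G \<currency> 0 = 0 \<Longrightarrow> fit G j \<currency> 1 = (G \<currency> 1) ^ j"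
proof (induction j)
  case (Suc j)
  then show ?case using compose_nth_1[of G "fit G j"] by simp
qed simp

lemma fit_one: "G \<currency> 0 = 0 \<Longrightarrow> fit G 1 = G"
  by (simp add: fps_X_fps_compose_startby0)

lemma fit_add: "G \<currency> 0 = 0 \<Longrightarrow> fit G (a + b) = fit G a oo fit G b"
proof (induction b)
  case 0 then show ?case by simp
next
  case (Suc b)
  have "fit G (a + Suc b) = (fit G a oo fit G b) oo G" using Suc by simp
  also have "\<dots> = fit G a oo (fit G b oo G)"
    by (rule fps_compose_assoc[symmetric]) (use Suc fit_0 in auto)
  finally show ?case by simp
qed

lemma fit_mult: "G \<currency> 0 = 0 \<Longrightarrow> fit G (a * b) = fit (fit G a) b"
proof (induction b)
  case 0 then show ?case by simp
next
  case (Suc b)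
  have "fit G (a * Suc b) = fit G (a * b + a)" by (simp add: add.commute)
  also have "\<dots> = fit G (a*b) oo fit G a" using Suc fit_add by blast
  finally show ?case using Suc by simp
qed

lemma geom_shift: "(\<Sum>i<Suc n. (l::'a::comm_ring_1)^i) = 1 + l * (\<Sum>i<n. l^i)"
  unfolding sum.lessThan_Suc_shift by (simp add: sum_distrib_left)

lemma fit_2_Suc:
  fixes G :: "'a::field fps"
  assumes "G \<currency> 0 = 0"
  shows "fit G (Suc j) \<currency> 2 = G \<currency> 2 * (G \<currency> 1) ^ j * (\<Sum>i<Suc j. (G \<currency> 1) ^ i)"
proof (induction j)
  case 0 then show ?case using assms by (simp add: fit_one[of G, simplified])
next
  case (Suc j)
  let ?l = "G \<currency> 1"
  note s = geom_shift[where n="Suc j" and l="?l"]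
  have "fit G (Suc (Suc j)) \<currency> 2 = fit G (Suc j) \<currency> 1 * G \<currency> 2 + fit G (Suc j) \<currency> 2 * ?l^2"
    using assms by (simp add: compose_nth_2)
  also have "\<dots> = ?l ^ Suc j * G \<currency> 2 + G \<currency> 2 * ?l ^ j * (\<Sum>i<Suc j. ?l ^ i) * ?l^2"
    using Suc.IH fit_1[OF assms(1), of "Suc j"] by simp
  also have "\<dots> = G \<currency> 2 * ?l ^ Suc j * (1 + ?l * (\<Sum>i<Suc j. ?l ^ i))"
    by (simp add: algebra_simps power2_eq_square)
  finally show ?case unfolding s .
qed

lemma fit_2:
  fixes G :: "'a::field fps"
  assumes "G \<currency> 0 = 0" and "j \<ge> 1"
  shows "fit G j \<currency> 2 = G \<currency> 2 * (G \<currency> 1) ^ (j - 1) * (\<Sum>i<j. (G \<currency> 1) ^ i)"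
  using fit_2_Suc[OF assms(1), of "j - 1"] assms(2) by simp

lemma fit_2_root:
  fixes G :: "'a::field fps"
  assumes "G \<currency> 0 = 0" and "r \<ge> 1" and "(G \<currency> 1) ^ r = 1" and "G \<currency> 1 \<noteq> 1"
  shows "fit G r \<currency> 2 = 0"
proof -
  have "(\<Sum>i<r. (G \<currency> 1) ^ i) = 0" using assms by (simp add: sum_gp_strict)
  then show ?thesis using fit_2[OF assms(1,2)] by simp
qed

lemma power_nth_self:
  fixes F :: "'a::field fps"
  assumes "F \<currency> 0 = 0"
  shows "(F ^ k) \<currency> k = (F \<currency> 1) ^ k"
proof -
  have "F = fps_X * fps_shift 1 F"
  proof (cases "F = 0")
    case True then show ?thesis by simp
  next
    case False
    then have "subdegree F \<noteq> 0" using assms by (simp add: subdegree_eq_0_iff)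
    then have "1 \<le> subdegree F" by simp
    then show ?thesis using fps_shift_times_fps_X[of F] by (simp add: mult.commute)
  qed
  then have "F ^ k = fps_X ^ k * (fps_shift 1 F) ^ k" by (metis power_mult_distrib)
  then have "(F ^ k) \<currency> k = ((fps_shift 1 F) ^ k) \<currency> 0" by (simp add: fps_X_power_mult_nth)
  then show ?thesis by (simp add: fps_power_zeroth)
qed

text \<open>High-order tangency to the identity is preserved and adds up under iteration.\<close>
lemma compose_R_low:
  fixes R F :: "'a::field fps"
  assumes "F \<currency> 0 = 0" "F \<currency> 1 = 1" "\<And>i. i < \<nu> \<Longrightarrow> R \<currency> i = 0"
  shows "\<And>n. n < \<nu> \<Longrightarrow> (R oo F) \<currency> n = 0" and "(R oo F) \<currency> \<nu> = R \<currency> \<nu>"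
proof -
  fix n assume "n < \<nu>"
  then show "(R oo F) \<currency> n = 0" using assms by (auto simp: fps_compose_nth intro!: sum.neutral)
next
  have "(R oo F) \<currency> \<nu> = (\<Sum>i\<in>{0..\<nu>}. R \<currency> i * (F ^ i) \<currency> \<nu>)" by (simp add: fps_compose_nth)
  also have "\<dots> = R \<currency> \<nu> * (F ^ \<nu>) \<currency> \<nu>"
    by (subst sum.remove[of _ \<nu>]) (use assms in \<open>auto intro!: sum.neutral\<close>)
  also have "(F ^ \<nu>) \<currency> \<nu> = 1" using assms by (simp add: power_nth_self)
  finally show "(R oo F) \<currency> \<nu> = R \<currency> \<nu>" by simp
qed

lemma fit_tangent:
  fixes H :: "'a::field fps"
  assumes H0: "H \<currency> 0 = 0" and H1: "H \<currency> 1 = 1"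
    and low: "\<And>i. 1 < i \<Longrightarrow> i < \<nu> \<Longrightarrow> H \<currency> i = 0" and nu: "\<nu> \<ge> 2"
  shows "(\<forall>i. 1 < i \<and> i < \<nu> \<longrightarrow> fit H j \<currency> i = 0) \<and> fit H j \<currency> \<nu> = of_nat j * H \<currency> \<nu>"
proof (induction j)
  case 0 then show ?case using nu by auto
next
  case (Suc j)
  define R where "R = H - fps_X"
  have HR: "H = fps_X + R" by (simp add: R_def)
  have Rl: "R \<currency> i = 0" if "i < \<nu>" for i using that H0 H1 low
    by (cases "i = 0"; cases "i = 1") (auto simp: R_def)
  have F0: "fit H j \<currency> 0 = 0" using fit_0 H0 by blast
  have F1: "fit H j \<currency> 1 = 1" using fit_1[OF H0] H1 by simp
  have "fit H (Suc j) = fit H 1 oo fit H j" using fit_add[OF H0, of 1 j] by simp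
  also have "\<dots> = H oo fit H j" using fit_one[OF H0] by simp
  also have "\<dots> = (fps_X oo fit H j) + (R oo fit H j)"
    by (metis HR fps_compose_add_distrib)
  also have "\<dots> = fit H j + (R oo fit H j)"
    using fps_X_fps_compose_startby0[OF F0] by simp
  finally have eq: "fit H (Suc j) = fit H j + (R oo fit H j)" .
  note cl = compose_R_low[of "fit H j" \<nu> R, OF F0 F1 Rl]
  have RH: "R \<currency> \<nu> = H \<currency> \<nu>" using nu by (simp add: R_def)
  have A: "\<forall>i. 1 < i \<and> i < \<nu> \<longrightarrow> (fit H j + (R oo fit H j)) \<currency> i = 0"
    using Suc.IH cl(1) by simp
  have B: "(fit H j + (R oo fit H j)) \<currency> \<nu> = of_nat (Suc j) * H \<currency> \<nu>"
    using Suc.IH cl(2) RH by (simp add: distrib_right)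
  show ?case unfolding eq using A B by blast
qed


lemma mu_prime_mult:
  assumes p: "prime (p::nat)" and nd: "\<not> p dvd d" and d0: "d \<noteq> 0"
  shows "moebius_mu (p * d) = - moebius_mu d"
proof -
  have cop: "coprime p d" using p nd by (simp add: prime_imp_coprime)
  have sq: "squarefree (p * d) \<longleftrightarrow> squarefree d"
    using squarefree_mult_coprime[OF cop] squarefree_prime[OF p] squarefree_multD(2)[of p d] by blast
  have pf: "prime_factors (p * d) = insert p (prime_factors d)"
    using p d0 by (simp add: prime_factors_product prime_prime_factors)
  have pn: "p \<notin> prime_factors d" using nd by (auto dest: in_prime_factors_imp_dvd)
  have "card (prime_factors (p * d)) = Suc (card (prime_factors d))"
    using pf pn by simp
  then show ?thesis unfolding moebius_mu_def using sq by simp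
qed

lemma mu_sq:
  assumes "prime (p::nat)" "p^2 dvd d"
  shows "moebius_mu d = 0"
proof -
  have "\<not> p dvd 1" using assms(1) by (metis nat_dvd_1_iff_1 not_prime_1)
  then have "\<not> squarefree d" using assms(2) by (intro not_squarefreeI)
  then show ?thesis by (simp add: moebius_mu_def)
qed

lemma mu_sum_divisors:
  assumes "N > (0::nat)"
  shows "(\<Sum>d\<in>{d. d dvd N}. moebius_mu d) = (if N = 1 then 1 else 0)"
proof (cases "N = 1")
  case True
  then show ?thesis by (simp add: moebius_mu_def)
next
  case False
  then obtain p where p: "prime p" "p dvd N" using assms prime_factor_nat by blast
  have p1: "p > 1" using p prime_gt_1_nat by blast
  define A where "A = {d. d dvd N \<and> \<not> p dvd d}"
  define B where "B = (\<lambda>d. p * d) ` A"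
  define C where "C = {d. d dvd N \<and> p^2 dvd d}"
  have fin: "finite {d. d dvd N}" using assms by simp
  have AB: "A \<inter> B = {}" unfolding A_def B_def by auto
  have ABC: "(A \<union> B) \<inter> C = {}"
  proof -
    have "A \<inter> C = {}"
    proof (rule ccontr)
      assume "A \<inter> C \<noteq> {}"
      then obtain d where "\<not> p dvd d" "p^2 dvd d" unfolding A_def C_def by auto
      moreover have "p dvd p^2" by (simp add: power2_eq_square)
      ultimately show False using dvd_trans by blast
    qed
    moreover have "B \<inter> C = {}"
    proof (rule ccontr)
      assume "B \<inter> C \<noteq> {}"
      then obtain d where "d \<in> A" "p^2 dvd p * d" unfolding B_def C_def by auto
      then have "p * p dvd p * d" by (simp add: power2_eq_square)
      then have "p dvd d" using p1 nat_mult_dvd_cancel1[of p p d] by simp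
      then show False using \<open>d \<in> A\<close> unfolding A_def by auto
    qed
    ultimately show ?thesis by blast
  qed
  have cover: "{d. d dvd N} = A \<union> B \<union> C"
  proof
    show "{d. d dvd N} \<subseteq> A \<union> B \<union> C"
    proof
      fix d assume d: "d \<in> {d. d dvd N}"
      show "d \<in> A \<union> B \<union> C"
      proof (cases "p dvd d")
        case False then show ?thesis using d unfolding A_def by auto
      next
        case True
        then obtain e where e: "d = p * e" by blast
        show ?thesis
        proof (cases "p dvd e")
          case True then have "p^2 dvd d" using e by (auto simp: power2_eq_square)
          then show ?thesis using d unfolding C_def by auto
        next
          case False
          have "e dvd N" using d e by auto
          then have "e \<in> A" using False unfolding A_def by auto
          then show ?thesis unfolding B_def using e by auto
        qed
      qed
    qed
  next
    show "A \<union> B \<union> C \<subseteq> {d. d dvd N}" unfolding A_def B_def C_def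
    proof safe
      fix d assume "d dvd N" "\<not> p dvd d"
      have "coprime p d" using p(1) \<open>\<not> p dvd d\<close> by (simp add: prime_imp_coprime)
      then show "p * d dvd N" using \<open>d dvd N\<close> p(2) by (simp add: divides_mult)
    qed
  qed
  have finA: "finite A" "finite B" "finite C" using fin cover by (auto intro: finite_subset)
  have "(\<Sum>d\<in>{d. d dvd N}. moebius_mu d) = sum moebius_mu A + sum moebius_mu B + sum moebius_mu C"
    unfolding cover using finA AB ABC by (simp add: sum.union_disjoint)
  also have "sum moebius_mu C = 0" unfolding C_def using p(1) by (auto intro!: sum.neutral mu_sq)
  also have "sum moebius_mu B = (\<Sum>d\<in>A. moebius_mu (p * d))"
    unfolding B_def using p1 by (subst sum.reindex) (auto simp: inj_on_def)
  also have "\<dots> = - sum moebius_mu A"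
    unfolding sum_negf[symmetric] using assms p(1)
    by (intro sum.cong refl mu_prime_mult) (auto simp: A_def)
  finally show ?thesis using False by simp
qed

lemma div_div_dvd:
  assumes "d dvd (N::nat)" "N > 0"
  shows "N div (N div d) = d" "(N div d) dvd N"
proof -
  obtain k where k: "N = d * k" using assms(1) by blast
  have "d > 0" "k > 0" using assms k by auto
  then show "N div (N div d) = d" "(N div d) dvd N" using k by auto
qed

lemma sum_divisors_flip:
  assumes "N > (0::nat)"
  shows "(\<Sum>j\<in>{j. j dvd N}. f (N div j)) = (\<Sum>d\<in>{d. d dvd N}. f d)"
  by (rule sum.reindex_bij_witness[of _ "\<lambda>d. N div d" "\<lambda>d. N div d"])
     (use assms div_div_dvd in auto)

lemma mu_sum_flip:
  assumes "N > (0::nat)"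
  shows "(\<Sum>j\<in>{j. j dvd N}. moebius_mu (N div j)) = (if N = 1 then 1 else 0)"
  using sum_divisors_flip[OF assms, of moebius_mu] mu_sum_divisors[OF assms] by simp

lemma sum_dvd_mult_reindex:
  assumes "m > (0::nat)" "m dvd n" "n > 0"
  shows "(\<Sum>d\<in>{d. d dvd n \<and> m dvd d}. f d) = (\<Sum>j\<in>{j. j dvd n div m}. f (m * j))"
proof (rule sum.reindex_bij_witness[of _ "\<lambda>j. m * j" "\<lambda>d. d div m"])
  fix d assume d: "d \<in> {d. d dvd n \<and> m dvd d}"
  then show "m * (d div m) = d" by auto
  from d obtain e where e: "d = m * e" by auto
  then show "d div m \<in> {j. j dvd n div m}" using d assms by (auto simp: dvd_div_iff_mult mult.commute)
  show "f (m * (d div m)) = f d" using e assms by simp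
next
  fix j assume j: "j \<in> {j. j dvd n div m}"
  then show "m * j div m = j" using assms by simp
  show "m * j \<in> {d. d dvd n \<and> m dvd d}" using j assms
    by (auto simp: dvd_div_iff_mult mult.commute)
qed

lemma mu_sum_multiples:
  assumes "r > (0::nat)" "N > 0"
  shows "(\<Sum>j\<in>{j. j dvd N \<and> r dvd j}. moebius_mu (N div j)) = (if N = r then 1 else 0)"
proof (cases "r dvd N")
  case False
  then have E: "{j. j dvd N \<and> r dvd j} = {}" by (auto dest: dvd_trans)
  have "N \<noteq> r" using False by auto
  then show ?thesis unfolding E by simp
next
  case True
  have "(\<Sum>j\<in>{j. j dvd N \<and> r dvd j}. moebius_mu (N div j))
      = (\<Sum>j\<in>{j. j dvd N div r}. moebius_mu (N div (r * j)))"
    by (rule sum_dvd_mult_reindex[OF assms(1) True assms(2)])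
  also have "\<dots> = (\<Sum>j\<in>{j. j dvd N div r}. moebius_mu ((N div r) div j))"
    by (simp only: div_mult2_eq)
  also have "\<dots> = (if N div r = 1 then 1 else 0)"
    using True assms by (intro mu_sum_flip) (auto simp: dvd_div_eq_0_iff)
  finally show ?thesis using True assms by auto
qed


interpretation ac: field_hom to_ac by unfold_locales auto
interpretation acm: map_poly_inj_idom_hom to_ac by unfold_locales

abbreviation acp :: "'k::field poly \<Rightarrow> 'k alg_closure poly" where
  "acp f \<equiv> map_poly to_ac f"

lemma acp_degree [simp]: "degree (acp f) = degree f"
  by (rule degree_map_poly) auto

lemma acp_coeff [simp]: "coeff (acp f) i = to_ac (coeff f i)"
  by (simp add: coeff_map_poly)

lemma acp_eq_0 [simp]: "acp f = 0 \<longleftrightarrow> f = 0"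
  by (simp add: map_poly_eq_0_iff)

lemma acp_mult [simp]: "acp (f * g) = acp f * acp g"
  by (rule acm.hom_mult)

lemma acp_add [simp]: "acp (f + g) = acp f + acp g"
  by (rule acm.hom_add)

lemma acp_diff [simp]: "acp (f - g) = acp f - acp g"
  by (rule acm.hom_minus)

lemma acp_power [simp]: "acp (f ^ n) = acp f ^ n"
  by (rule acm.hom_power)

lemma acp_X [simp]: "acp [:0, 1:] = [:0, 1:]"
  by simp

lemma acp_const [simp]: "acp [:c:] = [:to_ac c:]"
  by (cases "c = 0") (simp_all add: map_poly_pCons)

lemma acp_smult [simp]: "acp (smult c f) = smult (to_ac c) (acp f)"
proof -
  have "acp (smult c f) = acp ([:c:] * f)" by simp
  also have "\<dots> = [:to_ac c:] * acp f" by (simp only: acp_mult acp_const)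
  finally show ?thesis by simp
qed

lemma acp_sum [simp]: "acp (sum f A) = (\<Sum>x\<in>A. acp (f x))"
  by (induction A rule: infinite_finite_induct) auto

lemma acp_prod [simp]: "acp (prod f A) = (\<Prod>x\<in>A. acp (f x))"
  by (induction A rule: infinite_finite_induct) auto

lemma acp_inj: "acp f = acp g \<longleftrightarrow> f = g"
  by (metis acp_diff acp_eq_0 eq_iff_diff_eq_0)

lemma poly_acp_to_ac [simp]: "poly (acp f) (to_ac x) = to_ac (poly f x)"
  by (induction f) (auto simp: map_poly_pCons)

lemma coprime_bezout_poly:
  fixes p q :: "'a::field poly"
  assumes cop: "coprime p q"
  shows "\<exists>s t. s * p + t * q = 1"
proof -
  define S where "S = {g. g \<noteq> 0 \<and> (\<exists>s t. g = s * p + t * q)}"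
  have "p \<noteq> 0 \<or> q \<noteq> 0" using cop by auto
  then obtain g0 where "g0 \<in> S"
  proof
    assume "p \<noteq> 0"
    have "p = 1 * p + 0 * q" by simp
    then have "p \<in> S" unfolding S_def using \<open>p \<noteq> 0\<close> by blast
    then show ?thesis using that by blast
  next
    assume "q \<noteq> 0"
    have "q = 0 * p + 1 * q" by simp
    then have "q \<in> S" unfolding S_def using \<open>q \<noteq> 0\<close> by blast
    then show ?thesis using that by blast
  qed
  then obtain g where gS: "g \<in> S" and gmin0: "\<forall>h. h \<in> S \<longrightarrow> degree g \<le> degree h"
    using ex_has_least_nat[of "\<lambda>g. g \<in> S" g0 degree] by blast
  have gmin: "\<And>h. h \<in> S \<Longrightarrow> degree g \<le> degree h" using gmin0 by blast
  from gS obtain s t where g: "g \<noteq> 0" "g = s * p + t * q" unfolding S_def by auto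
  have dvd: "g dvd f" if "f = s' * p + t' * q" for f s' t'
  proof (rule ccontr)
    assume nd: "\<not> g dvd f"
    then have r0: "f mod g \<noteq> 0" by (simp add: mod_eq_0_iff_dvd)
    have "f mod g = f - (f div g) * g" by (simp add: minus_div_mult_eq_mod)
    also have "\<dots> = (s' - (f div g) * s) * p + (t' - (f div g) * t) * q"
      using g that by (simp add: algebra_simps)
    finally have "f mod g = (s' - (f div g) * s) * p + (t' - (f div g) * t) * q" .
    then have "f mod g \<in> S" using r0 unfolding S_def by blast
    then have "degree g \<le> degree (f mod g)" by (rule gmin)
    moreover have "degree (f mod g) < degree g" using degree_mod_less'[OF g(1) r0] .
    ultimately show False by simp
  qed
  have "g dvd p" by (rule dvd[of p 1 0]) simp
  moreover have "g dvd q" by (rule dvd[of q 0 1]) simp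
  ultimately have "is_unit g" using cop by (meson coprime_common_divisor)
  then obtain c where c0: "g = [:c:]" "c dvd 1" using is_unit_poly_iff by blast
  then have c: "g = [:c:]" "c \<noteq> 0" by auto
  have e: "s * p + t * q = [:c:]" using g(2) c(1) by simp
  have "smult (inverse c) s * p + smult (inverse c) t * q = smult (inverse c) (s * p + t * q)"
    by (simp add: smult_add_right)
  also have "\<dots> = [:inverse c * c:]" unfolding e by simp
  also have "\<dots> = 1" using c(2) by (simp add: pCons_one)
  finally show ?thesis by blast
qed

lemma coprime_no_common_root:
  fixes p q :: "'k::field poly"
  assumes "coprime p q" "poly (acp p) a = 0"
  shows "poly (acp q) a \<noteq> 0"
proof
  assume q: "poly (acp q) a = 0"
  obtain s t where "s * p + t * q = 1" using coprime_bezout_poly[OF assms(1)] by blast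
  then have "acp (s * p + t * q) = 1" by simp
  then have "poly (acp s * acp p + acp t * acp q) a = 1" by (metis acp_add acp_mult poly_1)
  then show False using assms(2) q by simp
qed

lemma infinite_K: "infinite (UNIV :: 'k::field_char_0 alg_closure set)"
  by (rule infinite_UNIV_char_0)

lemma poly_zero_cofinite:
  fixes F :: "'a::field_char_0 poly"
  assumes "finite B" "\<And>x. x \<notin> B \<Longrightarrow> poly F x = 0"
  shows "F = 0"
proof (rule ccontr)
  assume "F \<noteq> 0"
  then have "finite {x. poly F x = 0}" by (rule poly_roots_finite)
  then have "finite (B \<union> {x. poly F x = 0})" using assms(1) by simp
  moreover have "B \<union> {x. poly F x = 0} = UNIV" using assms(2) by auto
  ultimately show False using infinite_UNIV_char_0 by metis
qed

lemma quotient_values_infinite: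
  fixes U V :: "'a::{field_char_0,alg_closed_field} poly"
  assumes nocommon: "\<And>a. poly U a = 0 \<Longrightarrow> poly V a \<noteq> 0"
    and nc: "degree U \<ge> 1 \<or> degree V \<ge> 1"
  shows "infinite {b. \<exists>a. poly V a \<noteq> 0 \<and> b = poly U a / poly V a}"
proof
  let ?I = "{b. \<exists>a. poly V a \<noteq> 0 \<and> b = poly U a / poly V a}"
  assume fin: "finite ?I"
  have hit: "b \<in> ?I" if "degree (U - smult b V) \<ge> 1" for b
  proof -
    have "\<exists>x. poly (U - smult b V) x = 0"
      by (rule alg_closed_imp_poly_has_root) (use that in simp)
    then obtain a where a: "poly (U - smult b V) a = 0" by blast
    have "poly V a \<noteq> 0"
    proof
      assume "poly V a = 0"
      then have "poly U a = 0" using a by simp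
      then show False using nocommon \<open>poly V a = 0\<close> by blast
    qed
    moreover have "b = poly U a / poly V a" using a calculation by (simp add: field_simps)
    ultimately show ?thesis by blast
  qed
  have uniq: "b1 = b2" if h12: "degree (U - smult b1 V) = 0 \<and> degree (U - smult b2 V) = 0" for b1 b2 :: 'a
  proof (rule ccontr)
    assume ne: "b1 \<noteq> b2"
    have h1: "degree (U - smult b1 V) = 0" and h2: "degree (U - smult b2 V) = 0" using h12 by auto
    have "smult (b1 - b2) V = (U - smult b2 V) - (U - smult b1 V)" by (simp add: algebra_simps smult_diff_left)
    moreover have "degree ((U - smult b2 V) - (U - smult b1 V)) = 0"
      using degree_diff_le[of "U - smult b2 V" 0 "U - smult b1 V"] h1 h2 by simp
    ultimately have "degree (smult (b1 - b2) V) = 0" by simp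
    then have dV: "degree V = 0" using ne by simp
    have "U = (U - smult b1 V) + smult b1 V" by simp
    then have "degree U \<le> max (degree (U - smult b1 V)) (degree (smult b1 V))"
      by (metis degree_add_le_max)
    then have "degree U = 0" using h1 dV by (simp split: if_splits)
    then show False using nc dV by simp
  qed
  have "finite {b. degree (U - smult b V) = 0}"
  proof (cases "{b. degree (U - smult b V) = 0} = {}")
    case True show ?thesis unfolding True by simp
  next
    case False
    then obtain b1 where b1: "degree (U - smult b1 V) = 0" by auto
    then have "{b. degree (U - smult b V) = 0} \<subseteq> {b1}" using uniq by blast
    then show ?thesis using finite_subset by blast
  qed
  then have f2: "finite (?I \<union> {b. degree (U - smult b V) = 0})" using fin by blast
  have "UNIV \<subseteq> ?I \<union> {b. degree (U - smult b V) = 0}"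
  proof
    fix b :: 'a
    show "b \<in> ?I \<union> {b. degree (U - smult b V) = 0}"
    proof (cases "degree (U - smult b V) = 0")
      case False then show ?thesis using hit[of b] by simp
    qed simp
  qed
  then have "finite (UNIV :: 'a set)" using f2 finite_subset by blast
  then show False using infinite_UNIV_char_0 by blast
qed

lemma cross_agree:
  fixes U V U' V' :: "'a::field poly"
  assumes cross: "U * V' = U' * V"
    and nz: "poly U a \<noteq> 0 \<or> poly V a \<noteq> 0" and nz': "poly U' a \<noteq> 0 \<or> poly V' a \<noteq> 0"
  shows "(poly V a = 0 \<longleftrightarrow> poly V' a = 0) \<and>
         (poly V a \<noteq> 0 \<longrightarrow> poly U a / poly V a = poly U' a / poly V' a)"
proof -
  have e: "poly U a * poly V' a = poly U' a * poly V a"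
    using arg_cong[OF cross, of "\<lambda>f. poly f a"] by simp
  have 1: "poly V a = 0 \<longleftrightarrow> poly V' a = 0"
  proof
    assume "poly V a = 0" then show "poly V' a = 0" using e nz by simp
  next
    assume "poly V' a = 0" then show "poly V a = 0" using e nz' by simp
  qed
  show ?thesis
  proof (intro conjI impI 1)
    assume "poly V a \<noteq> 0"
    then have "poly V' a \<noteq> 0" using 1 by simp
    then show "poly U a / poly V a = poly U' a / poly V' a"
      using e \<open>poly V a \<noteq> 0\<close> by (simp add: frac_eq_eq)
  qed
qed


definition homog :: "nat \<Rightarrow> 'a::comm_ring_1 poly \<Rightarrow> 'a poly \<Rightarrow> 'a poly \<Rightarrow> 'a poly" where
  "homog D f u v = (\<Sum>i\<le>D. smult (coeff f i) (u ^ i * v ^ (D - i)))"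

lemma acp_homog: "acp (homog D f u v) = homog D (acp f) (acp u) (acp v)"
  by (simp add: homog_def)

lemma poly_homog:
  "poly (homog D F U V) a = (\<Sum>i\<le>D. coeff F i * poly U a ^ i * poly V a ^ (D - i))"
  by (simp add: homog_def poly_sum mult.assoc)

lemma sum_le_degree:
  fixes F :: "'a::comm_semiring_1 poly"
  assumes "degree F \<le> D"
  shows "(\<Sum>i\<le>degree F. coeff F i * x ^ i) = (\<Sum>i\<le>D. coeff F i * x ^ i)"
  by (rule sum.mono_neutral_left) (use assms in \<open>auto simp: coeff_eq_0\<close>)

lemma poly_sum_le:
  fixes F :: "'a::comm_semiring_1 poly"
  assumes "degree F \<le> D"
  shows "poly F x = (\<Sum>i\<le>D. coeff F i * x ^ i)"
  using sum_le_degree[OF assms] by (simp add: poly_altdef)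

lemma poly_homog_nz:
  fixes F U V :: "'a::field poly"
  assumes "degree F \<le> D" "poly V a \<noteq> 0"
  shows "poly (homog D F U V) a = poly V a ^ D * poly F (poly U a / poly V a)"
proof -
  have "poly V a ^ D * poly F (poly U a / poly V a)
      = (\<Sum>i\<le>D. poly V a ^ D * (coeff F i * (poly U a / poly V a) ^ i))"
    by (simp add: poly_sum_le[OF assms(1)] sum_distrib_left)
  also have "\<dots> = (\<Sum>i\<le>D. coeff F i * poly U a ^ i * poly V a ^ (D - i))"
  proof (rule sum.cong[OF refl])
    fix i assume "i \<in> {..D}"
    then have "poly V a ^ D = poly V a ^ i * poly V a ^ (D - i)"
      by (simp add: power_add[symmetric])
    then show "poly V a ^ D * (coeff F i * (poly U a / poly V a) ^ i) =
               coeff F i * poly U a ^ i * poly V a ^ (D - i)"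
      using assms(2) by (simp add: power_divide field_simps)
  qed
  finally show ?thesis by (simp add: poly_homog)
qed

lemma poly_homog_z:
  fixes F U V :: "'a::field poly"
  assumes "poly V a = 0"
  shows "poly (homog D F U V) a = coeff F D * poly U a ^ D"
proof -
  have "(\<Sum>i\<le>D. coeff F i * poly U a ^ i * poly V a ^ (D - i))
      = coeff F D * poly U a ^ D * poly V a ^ (D - D) +
        (\<Sum>i\<in>{..D} - {D}. coeff F i * poly U a ^ i * poly V a ^ (D - i))"
    by (subst sum.remove[of _ D]) auto
  also have "(\<Sum>i\<in>{..D} - {D}. coeff F i * poly U a ^ i * poly V a ^ (D - i)) = 0"
    using assms by (intro sum.neutral) auto
  finally show ?thesis by (simp add: poly_homog)
qed

lemma to_fract_power: "to_fract (x ^ n) = to_fract x ^ n"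
  by (induction n) auto

lemma to_fract_smult: "to_fract (smult c w) = rat_const c * to_fract w"
proof -
  have "smult c w = [:c:] * w" by simp
  then show ?thesis unfolding rat_const_def by (simp only: to_fract_mult)
qed

lemma rat_const_0 [simp]: "rat_const 0 = 0"
  by (simp add: rat_const_def)

lemma coeff_map_rat_const [simp]: "coeff (map_poly rat_const f) i = rat_const (coeff f i)"
  by (simp add: coeff_map_poly)

lemma fract_homog:
  fixes f u v :: "'a::field poly"
  assumes "v \<noteq> 0" "degree f \<le> D"
  shows "to_fract (homog D f u v) =
         to_fract v ^ D * poly (map_poly rat_const f) (to_fract u / to_fract v)"
proof -
  have dg: "degree (map_poly rat_const f) \<le> D"
    using degree_map_poly_le[of rat_const f] assms(2) by simp
  have "to_fract v ^ D * poly (map_poly rat_const f) (to_fract u / to_fract v)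
      = (\<Sum>i\<le>D. to_fract v ^ D * (rat_const (coeff f i) * (to_fract u / to_fract v) ^ i))"
    by (simp add: poly_sum_le[OF dg] sum_distrib_left)
  also have "\<dots> = (\<Sum>i\<le>D. rat_const (coeff f i) * (to_fract u ^ i * to_fract v ^ (D - i)))"
  proof (rule sum.cong[OF refl])
    fix i assume "i \<in> {..D}"
    then have "to_fract v ^ D = to_fract v ^ i * to_fract v ^ (D - i)"
      by (simp add: power_add[symmetric])
    then show "to_fract v ^ D * (rat_const (coeff f i) * (to_fract u / to_fract v) ^ i) =
               rat_const (coeff f i) * (to_fract u ^ i * to_fract v ^ (D - i))"
      using assms(1) by (simp add: power_divide field_simps)
  qed
  also have "\<dots> = to_fract (homog D f u v)"
    by (simp add: homog_def to_fract_smult to_fract_power)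
  finally show ?thesis by simp
qed

lemma rat_subst_fract:
  fixes p q u v :: "'a::field poly"
  assumes "v \<noteq> 0" "degree p \<le> D" "degree q \<le> D"
  shows "rat_subst p q (to_fract u / to_fract v) =
         to_fract (homog D p u v) / to_fract (homog D q u v)"
proof -
  have vD: "to_fract v ^ D \<noteq> 0" using assms(1) by simp
  show ?thesis unfolding rat_subst_def fract_homog[OF assms(1,2)] fract_homog[OF assms(1,3)]
    using vD assms(1) by simp
qed

lemma homog_X_1:
  fixes f :: "'a::field poly"
  shows "homog (degree f) f [:0, 1:] 1 = f"
  unfolding homog_def using poly_as_sum_of_monoms[of f] by (simp add: monom_altdef)

lemma rat_subst_X: "rat_subst p q rat_X = to_fract p / to_fract q"
proof -
  have "rat_subst p q rat_X = rat_subst p q (to_fract [:0, 1:] / to_fract 1)"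
    by (simp add: rat_X_def)
  also have "\<dots> = to_fract (homog (max (degree p) (degree q)) p [:0,1:] 1) /
       to_fract (homog (max (degree p) (degree q)) q [:0,1:] 1)"
    by (rule rat_subst_fract) simp_all
  also have "\<dots> = to_fract p / to_fract q"
  proof -
    let ?D = "max (degree p) (degree q)"
    have h: "homog D f [:0, 1:] 1 = f" if "degree f \<le> D" for f :: "'a poly" and D
    proof -
      have "homog D f [:0, 1:] 1 = (\<Sum>i\<le>D. monom (coeff f i) i)"
        unfolding homog_def by (simp add: monom_altdef)
      then show ?thesis using poly_as_sum_of_monoms'[OF that] by simp
    qed
    show ?thesis using h[of p ?D] h[of q ?D] by simp
  qed
  finally show ?thesis .
qed


lemma fract_cross:
  fixes a b c d :: "'a::idom"
  assumes "b \<noteq> 0" "d \<noteq> 0" "to_fract a / to_fract b = to_fract c / to_fract d"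
  shows "a * d = c * b"
proof -
  have "to_fract a * to_fract d = to_fract c * to_fract b"
    using assms by (simp add: frac_eq_eq)
  then show ?thesis by (simp only: to_fract_mult[symmetric] to_fract_eq_iff)
qed

lemma poly_degree0:
  fixes f :: "'a::comm_semiring_1 poly"
  assumes "degree f = 0"
  shows "poly f a = coeff f 0"
  by (subst poly_altdef) (simp add: assms)

locale dyn =
  fixes p q :: "'k::field_char_0 poly" and pd qd :: "nat \<Rightarrow> 'k poly"
  assumes nc: "nonconst_ratfun p q" and ir: "iterate_reps p q pd qd"
begin

abbreviation "D0 \<equiv> max (degree p) (degree q)"

lemma q0: "q \<noteq> 0" and cop: "coprime p q" and ncd: "degree p \<ge> 1 \<or> degree q \<ge> 1"
  using nc by (auto simp: nonconst_ratfun_def)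

lemma qd0: "d \<ge> 1 \<Longrightarrow> qd d \<noteq> 0"
  and copd: "d \<ge> 1 \<Longrightarrow> coprime (pd d) (qd d)"
  and frd: "d \<ge> 1 \<Longrightarrow> to_fract (pd d) / to_fract (qd d) = rat_iter p q d"
  using ir by (auto simp: iterate_reps_def)

lemma rat_iter_Suc: "rat_iter p q (Suc d) = rat_subst p q (rat_iter p q d)"
  by (simp add: rat_iter_def)

lemma rat_iter_1: "rat_iter p q 1 = to_fract p / to_fract q"
  by (simp add: rat_iter_def rat_subst_X)

lemma no_common_pq: "poly (acp p) b = 0 \<Longrightarrow> poly (acp q) b \<noteq> 0"
  using coprime_no_common_root[OF cop] by blast

lemma no_common_d: "d \<ge> 1 \<Longrightarrow> poly (acp (pd d)) a = 0 \<Longrightarrow> poly (acp (qd d)) a \<noteq> 0"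
  using coprime_no_common_root[OF copd] by blast

lemma lead_D0: "coeff p D0 \<noteq> 0 \<or> coeff q D0 \<noteq> 0"
proof (cases "degree q \<le> degree p")
  case True
  then have "D0 = degree p" by simp
  moreover have "p \<noteq> 0" using True ncd by auto
  ultimately show ?thesis by simp
next
  case False
  then have "D0 = degree q" by simp
  then show ?thesis using q0 by simp
qed

lemma phi_Some: "phi_P1 p q (Some b) =
   (if poly (acp q) b \<noteq> 0 then Some (poly (acp p) b / poly (acp q) b) else None)"
  by (simp add: phi_P1_def)

lemma phi_None: "phi_P1 p q None =
   (if degree p > degree q then None else Some (to_ac (coeff p (degree q) / lead_coeff q)))"
  by (simp add: phi_P1_def)

lemma phi_const_finite:
  assumes inf: "infinite B" and c: "\<forall>b\<in>B. phi_P1 p q (Some b) = C"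
  shows False
proof (cases C)
  case None
  then have "B \<subseteq> {b. poly (acp q) b = 0}" using c by (auto simp: phi_Some split: if_splits)
  moreover have "finite {b. poly (acp q) b = 0}" using q0 by (intro poly_roots_finite) simp
  ultimately show False using inf finite_subset by blast
next
  case (Some g)
  let ?F = "acp p - smult g (acp q)"
  have "B \<subseteq> {b. poly ?F b = 0}" using c Some by (auto simp: phi_Some split: if_splits)
  then have "infinite {b. poly ?F b = 0}" using inf finite_subset by blast
  then have F0: "?F = 0" using poly_roots_finite by blast
  show False
  proof (cases "degree q \<ge> 1")
    case True
    have "\<exists>x. poly (acp q) x = 0" by (rule alg_closed_imp_poly_has_root) (use True in simp)
    then obtain x where x: "poly (acp q) x = 0" by blast
    have "poly ?F x = 0" using F0 by simp
    then have "poly (acp p) x = 0" using x by simp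
    then show False using no_common_pq x by blast
  next
    case False
    then have dq: "degree q = 0" by simp
    have "acp p = smult g (acp q)" using F0 by simp
    then have "degree p = 0" using dq by (metis acp_degree degree_smult_le le_zero_eq)
    then show False using ncd dq by simp
  qed
qed

definition ev :: "nat \<Rightarrow> 'k alg_closure \<Rightarrow> 'k alg_closure option" where
  "ev d a = (if poly (acp (qd d)) a \<noteq> 0 then Some (poly (acp (pd d)) a / poly (acp (qd d)) a) else None)"

lemma ev_const:
  assumes "degree (pd d) = 0" "degree (qd d) = 0"
  shows "ev d a = ev d 0"
  using assms by (simp add: ev_def poly_degree0)

lemma image_infinite:
  assumes "d \<ge> 1" "degree (pd d) \<ge> 1 \<or> degree (qd d) \<ge> 1"
  shows "infinite {b. \<exists>a. poly (acp (qd d)) a \<noteq> 0 \<and> b = poly (acp (pd d)) a / poly (acp (qd d)) a}"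
  by (rule quotient_values_infinite) (use assms no_common_d in auto)

lemma pointwise:
  assumes "d \<ge> 1"
  shows "(\<forall>a. (phi_P1 p q ^^ d) (Some a) = ev d a) \<and> (degree (pd d) \<ge> 1 \<or> degree (qd d) \<ge> 1)"
  using assms
proof (induction d rule: dec_induct)
  case base
  have cr: "pd 1 * q = p * qd 1"
    by (rule fract_cross) (use qd0[of 1] q0 frd[of 1] rat_iter_1 in auto)
  then have crK: "acp (pd 1) * acp q = acp p * acp (qd 1)"
    by (metis acp_mult)
  have A: "(phi_P1 p q ^^ 1) (Some a) = ev 1 a" for a
  proof -
    have nz1: "poly (acp (pd 1)) a \<noteq> 0 \<or> poly (acp (qd 1)) a \<noteq> 0" using no_common_d[of 1 a] by auto
    have nz2: "poly (acp p) a \<noteq> 0 \<or> poly (acp q) a \<noteq> 0" using no_common_pq[of a] by auto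
    note ag = cross_agree[OF crK nz1 nz2]
    show ?thesis using ag by (auto simp: ev_def phi_Some)
  qed
  have B: "degree (pd 1) \<ge> 1 \<or> degree (qd 1) \<ge> 1"
  proof (rule ccontr)
    assume "\<not> ?thesis"
    then have c: "degree (pd 1) = 0" "degree (qd 1) = 0" by auto
    have "phi_P1 p q (Some b) = ev 1 0" for b using A[of b] ev_const[OF c, of b] by simp
    then have "\<forall>b\<in>UNIV. phi_P1 p q (Some b) = ev 1 0" by blast
    then show False using phi_const_finite infinite_UNIV_char_0 by blast
  qed
  show ?case using A B by blast
next
  case (step d)
  have d1: "d \<ge> 1" using step.hyps by simp
  note IHa = step.IH[THEN conjunct1] and IHb = step.IH[THEN conjunct2]
  define u where "u = pd d"
  define v where "v = qd d"
  define Hp where "Hp = homog D0 p u v"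
  define Hq where "Hq = homog D0 q u v"
  have v0: "v \<noteq> 0" using qd0[OF d1] by (simp add: v_def)
  have nocomm: "poly (acp u) a = 0 \<Longrightarrow> poly (acp v) a \<noteq> 0" for a
    using no_common_d[OF d1] by (simp add: u_def v_def)
  let ?I = "{b. \<exists>a. poly (acp v) a \<noteq> 0 \<and> b = poly (acp u) a / poly (acp v) a}"
  have Iinf: "infinite ?I" using image_infinite[OF d1 IHb] by (simp add: u_def v_def)
  have HpK: "poly (acp Hp) a = (if poly (acp v) a \<noteq> 0
      then poly (acp v) a ^ D0 * poly (acp p) (poly (acp u) a / poly (acp v) a)
      else to_ac (coeff p D0) * poly (acp u) a ^ D0)" for a
    unfolding Hp_def acp_homog
    by (auto simp: poly_homog_nz poly_homog_z)
  have HqK: "poly (acp Hq) a = (if poly (acp v) a \<noteq> 0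
      then poly (acp v) a ^ D0 * poly (acp q) (poly (acp u) a / poly (acp v) a)
      else to_ac (coeff q D0) * poly (acp u) a ^ D0)" for a
    unfolding Hq_def acp_homog
    by (auto simp: poly_homog_nz poly_homog_z)
  have Hq0: "Hq \<noteq> 0"
  proof
    assume H: "Hq = 0"
    have "?I \<subseteq> {b. poly (acp q) b = 0}"
    proof
      fix b assume "b \<in> ?I"
      then obtain a where a: "poly (acp v) a \<noteq> 0" "b = poly (acp u) a / poly (acp v) a" by blast
      have "poly (acp Hq) a = 0" using H by simp
      then have "poly (acp v) a ^ D0 * poly (acp q) b = 0" using HqK[of a] a by simp
      then show "b \<in> {b. poly (acp q) b = 0}" using a(1) by simp
    qed
    moreover have "finite {b. poly (acp q) b = 0}" using q0 by (intro poly_roots_finite) simp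
    ultimately show False using Iinf finite_subset by blast
  qed
  have fr: "to_fract (pd (Suc d)) / to_fract (qd (Suc d)) = to_fract Hp / to_fract Hq"
  proof -
    have "to_fract (pd (Suc d)) / to_fract (qd (Suc d)) = rat_subst p q (rat_iter p q d)"
      using frd[of "Suc d"] rat_iter_Suc by simp
    also have "\<dots> = rat_subst p q (to_fract u / to_fract v)" using frd[OF d1] by (simp add: u_def v_def)
    also have "\<dots> = to_fract Hp / to_fract Hq" unfolding Hp_def Hq_def
      by (rule rat_subst_fract[OF v0]) auto
    finally show ?thesis .
  qed
  have cr: "pd (Suc d) * Hq = Hp * qd (Suc d)"
    by (rule fract_cross[OF qd0 Hq0 fr]) simp
  then have crK: "acp (pd (Suc d)) * acp Hq = acp Hp * acp (qd (Suc d))"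
    by (metis acp_mult)
  have A: "(phi_P1 p q ^^ Suc d) (Some a) = ev (Suc d) a" for a
  proof -
    have nz1: "poly (acp (pd (Suc d))) a \<noteq> 0 \<or> poly (acp (qd (Suc d))) a \<noteq> 0"
      using no_common_d[of "Suc d" a] by auto
    have nz2: "poly (acp Hp) a \<noteq> 0 \<or> poly (acp Hq) a \<noteq> 0"
    proof (cases "poly (acp v) a = 0")
      case True
      then have ua: "poly (acp u) a \<noteq> 0" using nocomm by blast
      show ?thesis using lead_D0 ua True by (auto simp: HpK HqK)
    next
      case False
      let ?b = "poly (acp u) a / poly (acp v) a"
      have "poly (acp p) ?b \<noteq> 0 \<or> poly (acp q) ?b \<noteq> 0" using no_common_pq by blast
      then show ?thesis using False by (auto simp: HpK HqK)
    qed
    note ag = cross_agree[OF crK nz1 nz2]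
    have step1: "(phi_P1 p q ^^ Suc d) (Some a) = phi_P1 p q (ev d a)"
      using IHa by simp
    show ?thesis
    proof (cases "poly (acp v) a = 0")
      case True
      then have ua: "poly (acp u) a \<noteq> 0" using nocomm by blast
      have evd: "ev d a = None" using True by (simp add: ev_def v_def)
      show ?thesis
      proof (cases "degree p > degree q")
        case True
        then have "coeff q D0 = 0" by (simp add: coeff_eq_0)
        then have "poly (acp Hq) a = 0" using \<open>poly (acp v) a = 0\<close> by (simp add: HqK)
        then have "poly (acp (qd (Suc d))) a = 0" using ag by simp
        then show ?thesis using step1 evd True by (simp add: phi_None ev_def)
      next
        case False
        then have D0q: "D0 = degree q" by simp
        then have cq: "coeff q D0 \<noteq> 0" using q0 by simp
        have hq: "poly (acp Hq) a = to_ac (coeff q D0) * poly (acp u) a ^ D0"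
          using \<open>poly (acp v) a = 0\<close> by (simp add: HqK)
        have hp: "poly (acp Hp) a = to_ac (coeff p D0) * poly (acp u) a ^ D0"
          using \<open>poly (acp v) a = 0\<close> by (simp add: HpK)
        have hq0: "poly (acp Hq) a \<noteq> 0" using hq cq ua by simp
        then have q1: "poly (acp (qd (Suc d))) a \<noteq> 0" using ag by simp
        have "poly (acp (pd (Suc d))) a / poly (acp (qd (Suc d))) a = poly (acp Hp) a / poly (acp Hq) a"
          using ag q1 by simp
        also have "\<dots> = to_ac (coeff p (degree q) / lead_coeff q)"
          using hp hq ua cq D0q by simp
        finally show ?thesis using step1 evd False q1 by (simp add: phi_None ev_def)
      qed
    next
      case False
      let ?b = "poly (acp u) a / poly (acp v) a"
      have evd: "ev d a = Some ?b" using False by (simp add: ev_def u_def v_def)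
      have hq: "poly (acp Hq) a = poly (acp v) a ^ D0 * poly (acp q) ?b" using False by (simp add: HqK)
      have hp: "poly (acp Hp) a = poly (acp v) a ^ D0 * poly (acp p) ?b" using False by (simp add: HpK)
      show ?thesis
      proof (cases "poly (acp q) ?b = 0")
        case True
        then have "poly (acp Hq) a = 0" using hq by simp
        then have "poly (acp (qd (Suc d))) a = 0" using ag by simp
        then show ?thesis using step1 evd True by (simp add: phi_Some ev_def)
      next
        case qb: False
        then have hq0: "poly (acp Hq) a \<noteq> 0" using hq False by simp
        then have q1: "poly (acp (qd (Suc d))) a \<noteq> 0" using ag by simp
        have "poly (acp (pd (Suc d))) a / poly (acp (qd (Suc d))) a = poly (acp Hp) a / poly (acp Hq) a"
          using ag q1 by simp
        also have "\<dots> = poly (acp p) ?b / poly (acp q) ?b"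
          using hp hq False by simp
        finally show ?thesis using step1 evd qb q1 by (simp add: phi_Some ev_def)
      qed
    qed
  qed
  have B: "degree (pd (Suc d)) \<ge> 1 \<or> degree (qd (Suc d)) \<ge> 1"
  proof (rule ccontr)
    assume "\<not> ?thesis"
    then have c: "degree (pd (Suc d)) = 0" "degree (qd (Suc d)) = 0" by auto
    have "\<forall>b\<in>?I. phi_P1 p q (Some b) = ev (Suc d) 0"
    proof
      fix b assume "b \<in> ?I"
      then obtain a where a: "poly (acp v) a \<noteq> 0" "b = poly (acp u) a / poly (acp v) a" by blast
      have "ev d a = Some b" using a by (simp add: ev_def u_def v_def)
      then have "phi_P1 p q (Some b) = (phi_P1 p q ^^ Suc d) (Some a)" using IHa by simp
      also have "\<dots> = ev (Suc d) a" using A by simp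
      also have "\<dots> = ev (Suc d) 0" using ev_const[OF c] by simp
      finally show "phi_P1 p q (Some b) = ev (Suc d) 0" .
    qed
    then show False using phi_const_finite Iinf by blast
  qed
  show ?case using A B by blast
qed

end


definition E :: "'a::field \<Rightarrow> 'a poly \<Rightarrow> 'a fps" where
  "E a f = fps_of_poly (pcompose f [:a, 1:])"

lemma E_mult [simp]: "E a (f * g) = E a f * E a g"
  by (simp add: E_def pcompose_mult fps_of_poly_mult)
lemma E_add [simp]: "E a (f + g) = E a f + E a g"
  by (simp add: E_def pcompose_add fps_of_poly_add)
lemma E_diff [simp]: "E a (f - g) = E a f - E a g"
  by (simp add: E_def pcompose_diff fps_of_poly_diff)
lemma E_const [simp]: "E a [:c:] = fps_const c"
  by (simp add: E_def fps_of_poly_const)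
lemma E_0 [simp]: "E a 0 = 0"
  by (simp add: E_def)
lemma E_1 [simp]: "E a 1 = 1"
  by (simp add: E_def pcompose_1)
lemma E_X [simp]: "E a [:0, 1:] = fps_const a + fps_X"
  by (simp add: E_def pcompose_pCons fps_of_poly_linear)
lemma E_smult [simp]: "E a (smult c f) = fps_const c * E a f"
  by (simp add: E_def pcompose_smult fps_of_poly_smult)
lemma E_power [simp]: "E a (f ^ n) = E a f ^ n"
  by (induction n) auto
lemma E_sum [simp]: "E a (sum f A) = (\<Sum>x\<in>A. E a (f x))"
  by (induction A rule: infinite_finite_induct) auto
lemma E_pCons: "E a (pCons c f) = fps_const c + (fps_const a + fps_X) * E a f"
proof -
  have "pCons c f = [:c:] + [:0, 1:] * f" by simp
  then show ?thesis by (metis E_add E_const E_mult E_X)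
qed

lemma E_nth0 [simp]: "E a f \<currency> 0 = poly f a"
  by (simp add: E_def poly_0_coeff_0[symmetric] poly_pcompose)

lemma E_lin: "E a [:- a, 1:] = fps_X"
  by (simp add: E_pCons)

lemma E_decomp:
  assumes "f \<noteq> 0"
  shows "\<exists>h. E a f = fps_X ^ order a f * E a h \<and> poly h a \<noteq> 0"
proof -
  obtain h where h: "f = [:- a, 1:] ^ order a f * h" "\<not> [:- a, 1:] dvd h"
    using order_decomp[OF assms] by blast
  have ha: "poly h a \<noteq> 0" using h(2) by (simp add: poly_eq_0_iff_dvd)
  have "E a f = E a ([:- a, 1:] ^ order a f * h)" using h(1) by simp
  also have "\<dots> = fps_X ^ order a f * E a h" by (simp only: E_mult E_power E_lin)
  finally show ?thesis using ha by blast
qed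

lemma E_ne0:
  assumes "f \<noteq> 0" shows "E a f \<noteq> 0"
proof -
  obtain h where h: "E a f = fps_X ^ order a f * E a h" "poly h a \<noteq> 0"
    using E_decomp[OF assms] by blast
  have "E a h \<noteq> 0"
  proof
    assume "E a h = 0"
    then have "E a h \<currency> 0 = 0" by simp
    then show False using h(2) by simp
  qed
  then show ?thesis using h(1) by simp
qed

lemma E_eq0 [simp]: "E a f = 0 \<longleftrightarrow> f = 0"
  using E_ne0 by fastforce

lemma E_subdegree:
  assumes "f \<noteq> 0"
  shows "subdegree (E a f) = order a f"
proof -
  obtain h where h: "E a f = fps_X ^ order a f * E a h" "poly h a \<noteq> 0"
    using E_decomp[OF assms] by blast
  have "E a h \<noteq> 0"
  proof
    assume "E a h = 0"
    then have "E a h \<currency> 0 = 0" by simp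
    then show False using h(2) by simp
  qed
  moreover have "subdegree (E a h) = 0" using h(2) by (simp add: subdegree_eq_0_iff)
  ultimately show ?thesis using h(1) by (simp add: subdegree_mult)
qed

lemma E_nz_at:
  assumes "poly f a \<noteq> 0" shows "E a f \<noteq> 0"
proof
  assume "E a f = 0"
  then have "E a f \<currency> 0 = 0" by simp
  then show False using assms by simp
qed

lemma E_compose:
  assumes "T \<currency> 0 = 0"
  shows "E a f oo T = poly (map_poly fps_const f) (fps_const a + T)"
proof (induction f)
  case 0 then show ?case by simp
next
  case (pCons c f)
  have "E a (pCons c f) oo T = fps_const c + (fps_const a + T) * (E a f oo T)"
    unfolding E_pCons using assms
    by (simp add: fps_compose_add_distrib fps_compose_mult_distrib fps_X_fps_compose_startby0)
  then show ?case using pCons by (simp add: map_poly_pCons)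
qed

lemma E_homog:
  "E a (homog D F U V) = (\<Sum>i\<le>D. fps_const (coeff F i) * E a U ^ i * E a V ^ (D - i))"
  by (simp add: homog_def mult.assoc)

lemma homog_fps:
  fixes F :: "'a::field poly"
  assumes "degree F \<le> D" "EU = EV * S"
  shows "(\<Sum>i\<le>D. fps_const (coeff F i) * EU ^ i * EV ^ (D - i)) = EV ^ D * poly (map_poly fps_const F) S"
proof -
  have dg: "degree (map_poly fps_const F) \<le> D"
    using degree_map_poly_le[of fps_const F] assms(1) by simp
  have "EV ^ D * poly (map_poly fps_const F) S = (\<Sum>i\<le>D. EV ^ D * (fps_const (coeff F i) * S ^ i))"
    by (simp add: poly_sum_le[OF dg] sum_distrib_left coeff_map_poly)
  also have "\<dots> = (\<Sum>i\<le>D. fps_const (coeff F i) * EU ^ i * EV ^ (D - i))"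
  proof (rule sum.cong[OF refl])
    fix i assume "i \<in> {..D}"
    then have "EV ^ D = EV ^ i * EV ^ (D - i)" by (simp add: power_add[symmetric])
    then show "EV ^ D * (fps_const (coeff F i) * S ^ i) = fps_const (coeff F i) * EU ^ i * EV ^ (D - i)"
      using assms(2) by (simp add: power_mult_distrib mult_ac)
  qed
  finally show ?thesis by simp
qed

context dyn
begin

definition gd :: "nat \<Rightarrow> 'k poly" where
  "gd d = [:0, 1:] * qd d - pd d"

lemma acp_gd: "acp (gd d) = [:0, 1:] * acp (qd d) - acp (pd d)"
  unfolding gd_def by (simp only: acp_diff acp_mult acp_X)

lemma poly_gd: "poly (acp (gd d)) a = a * poly (acp (qd d)) a - poly (acp (pd d)) a"
  unfolding acp_gd by simp

lemma fixed_pt: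
  assumes "d \<ge> 1" "(phi_P1 p q ^^ d) (Some a) = Some a"
  shows "poly (acp (qd d)) a \<noteq> 0" "poly (acp (pd d)) a = a * poly (acp (qd d)) a"
proof -
  have "ev d a = Some a" using assms pointwise[OF assms(1)] by simp
  then have q: "poly (acp (qd d)) a \<noteq> 0" and v: "poly (acp (pd d)) a / poly (acp (qd d)) a = a"
    by (auto simp: ev_def split: if_splits)
  show "poly (acp (qd d)) a \<noteq> 0" by (rule q)
  show "poly (acp (pd d)) a = a * poly (acp (qd d)) a" using q v by (simp add: divide_eq_eq)
qed

lemma fix_iff:
  assumes "d \<ge> 1"
  shows "(phi_P1 p q ^^ d) (Some a) = Some a \<longleftrightarrow> poly (acp (gd d)) a = 0"
proof -
  have pw: "(phi_P1 p q ^^ d) (Some a) = ev d a" using pointwise[OF assms] by blast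
  show ?thesis
  proof (cases "poly (acp (qd d)) a = 0")
    case True
    then have "poly (acp (pd d)) a \<noteq> 0" using no_common_d[OF assms] by blast
    then show ?thesis using True pw by (simp add: ev_def poly_gd)
  next
    case False
    then show ?thesis using pw by (auto simp: ev_def poly_gd field_simps)
  qed
qed

lemma comp_identity:
  assumes d: "d \<ge> 1" and e: "e \<ge> 1"
    and qe: "poly (acp (qd e)) a0 \<noteq> 0"
    and qdb: "poly (acp (qd d)) (poly (acp (pd e)) a0 / poly (acp (qd e)) a0) \<noteq> 0"
  defines "Dd \<equiv> max (degree (pd d)) (degree (qd d))"
  shows "acp (pd (d + e)) * homog Dd (acp (qd d)) (acp (pd e)) (acp (qd e)) =
         acp (qd (d + e)) * homog Dd (acp (pd d)) (acp (pd e)) (acp (qd e))"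
proof -
  let ?Hq = "homog Dd (acp (qd d)) (acp (pd e)) (acp (qd e))"
  let ?Hp = "homog Dd (acp (pd d)) (acp (pd e)) (acp (qd e))"
  let ?G = "acp (qd e) * ?Hq"
  have dq: "degree (acp (qd d)) \<le> Dd" and dp: "degree (acp (pd d)) \<le> Dd" by (auto simp: Dd_def)
  have "poly ?G a0 \<noteq> 0" using qe qdb by (simp add: poly_homog_nz[OF dq qe])
  then have G0: "?G \<noteq> 0" by auto
  have "acp (pd (d + e)) * ?Hq - acp (qd (d + e)) * ?Hp = 0"
  proof (rule poly_zero_cofinite)
    show "finite {x. poly ?G x = 0}" using G0 by (rule poly_roots_finite)
  next
    fix x assume "x \<notin> {x. poly ?G x = 0}"
    then have qx: "poly (acp (qd e)) x \<noteq> 0" and hx: "poly ?Hq x \<noteq> 0" by auto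
    let ?y = "poly (acp (pd e)) x / poly (acp (qd e)) x"
    have hq: "poly ?Hq x = poly (acp (qd e)) x ^ Dd * poly (acp (qd d)) ?y"
      using poly_homog_nz[OF dq qx] .
    have hp: "poly ?Hp x = poly (acp (qd e)) x ^ Dd * poly (acp (pd d)) ?y"
      using poly_homog_nz[OF dp qx] .
    have qy: "poly (acp (qd d)) ?y \<noteq> 0" using hx hq by auto
    have "(phi_P1 p q ^^ (d + e)) (Some x) = (phi_P1 p q ^^ d) ((phi_P1 p q ^^ e) (Some x))"
      by (simp add: funpow_add)
    also have "(phi_P1 p q ^^ e) (Some x) = Some ?y"
      using pointwise[OF e] qx by (simp add: ev_def)
    also have "(phi_P1 p q ^^ d) (Some ?y) = Some (poly (acp (pd d)) ?y / poly (acp (qd d)) ?y)"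
      using pointwise[OF d] qy by (simp add: ev_def)
    finally have "ev (d + e) x = Some (poly (acp (pd d)) ?y / poly (acp (qd d)) ?y)"
      using pointwise[of "d + e"] d by simp
    then have q1: "poly (acp (qd (d + e))) x \<noteq> 0" and
      v1: "poly (acp (pd (d + e))) x / poly (acp (qd (d + e))) x = poly (acp (pd d)) ?y / poly (acp (qd d)) ?y"
      by (auto simp: ev_def split: if_splits)
    have "poly (acp (pd (d + e))) x * poly (acp (qd d)) ?y = poly (acp (pd d)) ?y * poly (acp (qd (d + e))) x"
      using v1 q1 qy by (simp add: frac_eq_eq)
    then show "poly (acp (pd (d + e)) * ?Hq - acp (qd (d + e)) * ?Hp) x = 0"
      by (simp add: hq hp algebra_simps)
  qed
  then show ?thesis by simp
qed

definition Tl :: "'k alg_closure \<Rightarrow> nat \<Rightarrow> 'k alg_closure fps" where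
  "Tl a d = E a (acp (pd d)) * inverse (E a (acp (qd d))) - fps_const a"

lemma Tl_eq:
  assumes "poly (acp (qd d)) a \<noteq> 0"
  shows "E a (acp (pd d)) = E a (acp (qd d)) * (fps_const a + Tl a d)"
proof -
  have "E a (acp (qd d)) * inverse (E a (acp (qd d))) = 1"
    using assms by (intro inverse_mult_eq_1') simp
  then show ?thesis by (simp add: Tl_def algebra_simps)
qed

lemma Tl_0:
  assumes "d \<ge> 1" "(phi_P1 p q ^^ d) (Some a) = Some a"
  shows "Tl a d \<currency> 0 = 0"
  using fixed_pt[OF assms] by (simp add: Tl_def)

lemma Tl_comp:
  assumes d: "d \<ge> 1" and e: "e \<ge> 1"
    and fd: "(phi_P1 p q ^^ d) (Some a) = Some a" and fe: "(phi_P1 p q ^^ e) (Some a) = Some a"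
  shows "Tl a (d + e) = Tl a d oo Tl a e"
proof -
  have fde: "(phi_P1 p q ^^ (d + e)) (Some a) = Some a" using fd fe by (simp add: funpow_add)
  note qd_a = fixed_pt(1)[OF d fd] and qe_a = fixed_pt(1)[OF e fe]
    and pe_a = fixed_pt(2)[OF e fe]
  have qde_a: "poly (acp (qd (d + e))) a \<noteq> 0" using fixed_pt(1)[of "d + e" a] fde d by simp
  have ya: "poly (acp (pd e)) a / poly (acp (qd e)) a = a" using pe_a qe_a by simp
  define Dd where "Dd = max (degree (pd d)) (degree (qd d))"
  have ci: "acp (pd (d + e)) * homog Dd (acp (qd d)) (acp (pd e)) (acp (qd e)) =
         acp (qd (d + e)) * homog Dd (acp (pd d)) (acp (pd e)) (acp (qd e))"
    unfolding Dd_def by (rule comp_identity[OF d e qe_a]) (use ya qd_a in simp)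
  let ?Te = "Tl a e" and ?Td = "Tl a d"
  let ?Se = "fps_const a + ?Te"
  have Te0: "?Te \<currency> 0 = 0" by (rule Tl_0[OF e fe])
  have Td0: "?Td \<currency> 0 = 0" by (rule Tl_0[OF d fd])
  have eqe: "E a (acp (pd e)) = E a (acp (qd e)) * ?Se" by (rule Tl_eq[OF qe_a])
  have dq: "degree (acp (qd d)) \<le> Dd" and dp: "degree (acp (pd d)) \<le> Dd" by (auto simp: Dd_def)
  have hq: "E a (homog Dd (acp (qd d)) (acp (pd e)) (acp (qd e))) =
            E a (acp (qd e)) ^ Dd * (E a (acp (qd d)) oo ?Te)"
    unfolding E_homog homog_fps[OF dq eqe] E_compose[OF Te0] ..
  have hp: "E a (homog Dd (acp (pd d)) (acp (pd e)) (acp (qd e))) =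
            E a (acp (qd e)) ^ Dd * (E a (acp (pd d)) oo ?Te)"
    unfolding E_homog homog_fps[OF dp eqe] E_compose[OF Te0] ..
  let ?W = "E a (acp (qd d)) oo ?Te"
  have W0: "?W \<noteq> 0"
  proof
    assume "?W = 0"
    then have "?W \<currency> 0 = 0" by simp
    then show False using qd_a by simp
  qed
  have Ee0: "E a (acp (qd e)) ^ Dd \<noteq> 0" using E_nz_at[OF qe_a] by simp
  have "E a (acp (pd (d + e))) * (E a (acp (qd e)) ^ Dd * ?W) =
        E a (acp (qd (d + e))) * (E a (acp (qd e)) ^ Dd * (E a (acp (pd d)) oo ?Te))"
    using arg_cong[OF ci, of "E a"] hq hp by (simp only: E_mult)
  then have "E a (acp (qd e)) ^ Dd * (E a (acp (pd (d + e))) * ?W) =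
        E a (acp (qd e)) ^ Dd * (E a (acp (qd (d + e))) * (E a (acp (pd d)) oo ?Te))"
    by (simp only: mult.left_commute)
  then have c1: "E a (acp (pd (d + e))) * ?W = E a (acp (qd (d + e))) * (E a (acp (pd d)) oo ?Te)"
    using mult_left_cancel[OF Ee0] by blast
  have "E a (acp (pd d)) oo ?Te = ?W * (fps_const a + (?Td oo ?Te))"
    using Tl_eq[OF qd_a] Te0
    by (simp add: fps_compose_mult_distrib fps_compose_add_distrib)
  moreover have "E a (acp (pd (d + e))) = E a (acp (qd (d + e))) * (fps_const a + Tl a (d + e))"
    by (rule Tl_eq[OF qde_a])
  ultimately have "E a (acp (qd (d + e))) * ?W * (fps_const a + Tl a (d + e)) =
                   E a (acp (qd (d + e))) * ?W * (fps_const a + (?Td oo ?Te))"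
    using c1 by (simp add: mult_ac)
  moreover have "E a (acp (qd (d + e))) * ?W \<noteq> 0"
    using W0 E_nz_at[OF qde_a] by simp
  ultimately have "fps_const a + Tl a (d + e) = fps_const a + (?Td oo ?Te)"
    using mult_left_cancel by blast
  then show ?thesis by simp
qed

lemma order_Tl:
  assumes "d \<ge> 1" "(phi_P1 p q ^^ d) (Some a) = Some a" "gd d \<noteq> 0"
  shows "order a (acp (gd d)) = subdegree (fps_X - Tl a d)"
proof -
  note qa = fixed_pt(1)[OF assms(1,2)]
  have "E a (acp (gd d)) = (fps_const a + fps_X) * E a (acp (qd d)) - E a (acp (pd d))"
    unfolding acp_gd by (simp only: E_diff E_mult E_X)
  also have "\<dots> = E a (acp (qd d)) * (fps_X - Tl a d)"
    using Tl_eq[OF qa] by (simp add: algebra_simps)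
  finally have eq: "E a (acp (gd d)) = E a (acp (qd d)) * (fps_X - Tl a d)" .
  have nz: "E a (acp (gd d)) \<noteq> 0" using assms(3) by simp
  then have n2: "fps_X - Tl a d \<noteq> 0" using eq by auto
  have n1: "E a (acp (qd d)) \<noteq> 0" using E_nz_at[OF qa] .
  have s1: "subdegree (E a (acp (qd d))) = 0" using qa by (simp add: subdegree_eq_0_iff)
  have "order a (acp (gd d)) = subdegree (E a (acp (gd d)))"
    using E_subdegree[of "acp (gd d)" a] assms(3) by simp
  also have "\<dots> = subdegree (fps_X - Tl a d)" using eq n1 n2 s1 by simp
  finally show ?thesis .
qed

end

notation fps_nth (infixl "\<currency>" 75)

lemma period_structure:
  fixes f :: "'a \<Rightarrow> 'a"
  assumes m1: "m \<ge> 1" and fm: "(f ^^ m) x = x" and mn: "\<forall>k. 1 \<le> k \<and> k < m \<longrightarrow> (f ^^ k) x \<noteq> x"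
  shows "(f ^^ d) x = x \<longleftrightarrow> m dvd d"
proof
  have mult: "(f ^^ (m * k)) x = x" for k
  proof (induction k)
    case (Suc k)
    have "(f ^^ (m * Suc k)) x = (f ^^ m) ((f ^^ (m * k)) x)"
      by (simp add: funpow_add)
    then show ?case using Suc fm by simp
  qed simp
  show "m dvd d \<Longrightarrow> (f ^^ d) x = x" using mult by (auto elim!: dvdE)
  assume fd: "(f ^^ d) x = x"
  have e: "d mod m + m * (d div m) = d" by simp
  have "(f ^^ d) x = (f ^^ (d mod m)) ((f ^^ (m * (d div m))) x)"
    by (metis e funpow_add comp_apply)
  then have "(f ^^ (d mod m)) x = x" using fd mult by simp
  moreover have "d mod m < m" using m1 by simp
  ultimately have "d mod m = 0" using mn by (metis less_one not_le)
  then show "m dvd d" by (simp add: dvd_eq_mod_eq_0)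
qed

lemma least_period:
  fixes f :: "'a \<Rightarrow> 'a"
  assumes "d0 \<ge> 1" "(f ^^ d0) x = x"
  obtains m where "m \<ge> 1" "(f ^^ m) x = x" "\<forall>k. 1 \<le> k \<and> k < m \<longrightarrow> (f ^^ k) x \<noteq> x"
proof -
  define m where "m = (LEAST k. 1 \<le> k \<and> (f ^^ k) x = x)"
  have P: "1 \<le> m \<and> (f ^^ m) x = x" unfolding m_def by (rule LeastI[of _ d0]) (use assms in simp)
  have "\<forall>k. 1 \<le> k \<and> k < m \<longrightarrow> (f ^^ k) x \<noteq> x" unfolding m_def using not_less_Least by blast
  then show ?thesis using P that by blast
qed

lemma funpow_times: "(((*) l) ^^ j) (1::'a::monoid_mult) = l ^ j"
  by (induction j) auto

lemma sd_one:
  fixes G :: "'a::field fps"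
  assumes "G \<currency> 0 = 0" "(G \<currency> 1) ^ j \<noteq> 1"
  shows "subdegree (fps_X - fit G j) = 1"
proof (rule subdegreeI)
  show "(fps_X - fit G j) \<currency> 1 \<noteq> 0" using assms fit_1[OF assms(1), of j] by simp
  fix i :: nat assume "i < 1"
  then show "(fps_X - fit G j) \<currency> i = 0" using fit_0[OF assms(1)] by simp
qed

lemma sd_nu:
  fixes H :: "'a::field_char_0 fps"
  assumes H0: "H \<currency> 0 = 0" and H1: "H \<currency> 1 = 1" and HX: "H \<noteq> fps_X" and k: "k \<ge> 1"
  shows "subdegree (fps_X - fit H k) = subdegree (H - fps_X)" and "subdegree (H - fps_X) \<ge> 2"
proof -
  define nu where "nu = subdegree (H - fps_X)"
  let ?nu = nu
  have nz: "H - fps_X \<noteq> 0" using HX by simp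
  have c: "(H - fps_X) \<currency> ?nu \<noteq> 0" unfolding nu_def by (rule nth_subdegree_nonzero[OF nz])
  have "?nu \<noteq> 0"
  proof
    assume "?nu = 0" then have "(H - fps_X) \<currency> 0 \<noteq> 0" using c by simp
    then show False using H0 by simp
  qed
  moreover have "?nu \<noteq> 1"
  proof
    assume "?nu = 1" then have "(H - fps_X) \<currency> 1 \<noteq> 0" using c by simp
    then show False using H1 by simp
  qed
  ultimately have nu2: "?nu \<ge> 2" by simp
  then show "subdegree (H - fps_X) \<ge> 2" by (simp add: nu_def)
  have low: "H \<currency> i = 0" if "1 < i" "i < ?nu" for i
  proof -
    have "(H - fps_X) \<currency> i = 0" using that unfolding nu_def by (intro nth_less_subdegree_zero)
    then show ?thesis using that by simp
  qed
  have cH: "H \<currency> ?nu \<noteq> 0" using c nu2 by simp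
  note ft = fit_tangent[OF H0 H1 low nu2, of k]
  show "subdegree (fps_X - fit H k) = subdegree (H - fps_X)"
    unfolding nu_def[symmetric]
  proof (rule subdegreeI)
    have "of_nat k * H \<currency> ?nu \<noteq> 0" using k cH by simp
    then show "(fps_X - fit H k) \<currency> ?nu \<noteq> 0" using ft nu2 by simp
  next
    fix i assume i: "i < ?nu"
    show "(fps_X - fit H k) \<currency> i = 0"
    proof (cases "i = 0")
      case True then show ?thesis using fit_0[OF H0] by simp
    next
      case False
      show ?thesis
      proof (cases "i = 1")
        case True then show ?thesis using fit_1[OF H0, of k] H1 by simp
      next
        case False
        then have "1 < i" using \<open>i \<noteq> 0\<close> by simp
        then show ?thesis using ft i by simp
      qed
    qed
  qed
qed

lemma fps_mobius:
  fixes G :: "'a::field_char_0 fps"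
  assumes G0: "G \<currency> 0 = 0" and N: "N \<ge> 1" and nz: "\<forall>j. j dvd N \<longrightarrow> fit G j \<noteq> fps_X"
  defines "V \<equiv> (\<Sum>j\<in>{j. j dvd N}. moebius_mu (N div j) * int (subdegree (fps_X - fit G j)))"
  shows "(N = 1 \<longrightarrow> V \<ge> 1) \<and> (N \<noteq> 1 \<longrightarrow> V = 0 \<or> V \<ge> 2)"
proof -
  let ?l = "G \<currency> 1"
  have N0: "N > 0" using N by simp
  have M1: "(\<Sum>j\<in>{j. j dvd N}. moebius_mu (N div j)) = (if N = 1 then 1 else 0)"
    by (rule mu_sum_flip[OF N0])
  show ?thesis
  proof (cases "\<exists>j. j dvd N \<and> ?l ^ j = 1")
    case False
    have "V = (\<Sum>j\<in>{j. j dvd N}. moebius_mu (N div j))"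
      unfolding V_def
    proof (rule sum.cong[OF refl])
      fix j assume "j \<in> {j. j dvd N}"
      then have "?l ^ j \<noteq> 1" using False by blast
      then show "moebius_mu (N div j) * int (subdegree (fps_X - fit G j)) = moebius_mu (N div j)"
        using sd_one[OF G0] by simp
    qed
    then show ?thesis using M1 by simp
  next
    case True
    then obtain j0 where j0: "j0 dvd N" "?l ^ j0 = 1" by blast
    have j01: "j0 \<ge> 1" using j0 N by (cases j0) auto
    have "((*) ?l ^^ j0) 1 = 1" using j0 funpow_times by metis
    then obtain r where r1: "r \<ge> 1" and rr: "((*) ?l ^^ r) 1 = 1"
      and rmin: "\<forall>k. 1 \<le> k \<and> k < r \<longrightarrow> ((*) ?l ^^ k) 1 \<noteq> 1"
      using least_period[OF j01] by metis
    have rdvd: "?l ^ j = 1 \<longleftrightarrow> r dvd j" for j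
      using period_structure[OF r1 rr rmin, of j] funpow_times by metis
    have rN: "r dvd N" using rdvd j0 dvd_trans by blast
    define H where "H = fit G r"
    have H0: "H \<currency> 0 = 0" unfolding H_def using fit_0[OF G0] .
    have H1: "H \<currency> 1 = 1" unfolding H_def using fit_1[OF G0, of r] rdvd[of r] by simp
    have HX: "H \<noteq> fps_X" unfolding H_def using nz rN by blast
    define nu where "nu = subdegree (H - fps_X)"
    have nu2: "nu \<ge> 2" unfolding nu_def by (rule sd_nu(2)[OF H0 H1 HX r1])
    have sj: "subdegree (fps_X - fit G j) = (if r dvd j then nu else 1)" if "j dvd N" for j
    proof (cases "r dvd j")
      case True
      then obtain k where k: "j = r * k" by blast
      have "k \<ge> 1" using k that N by (cases k) auto
      moreover have "fit G j = fit H k" unfolding H_def k by (rule fit_mult[OF G0])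
      ultimately show ?thesis using sd_nu(1)[OF H0 H1 HX] True by (simp add: nu_def)
    next
      case False
      then show ?thesis using sd_one[OF G0] rdvd by simp
    qed
    have "V = (\<Sum>j\<in>{j. j dvd N}. moebius_mu (N div j) +
               (if r dvd j then moebius_mu (N div j) * (int nu - 1) else 0))"
      unfolding V_def by (rule sum.cong[OF refl]) (use sj in \<open>auto simp: algebra_simps\<close>)
    also have "\<dots> = (\<Sum>j\<in>{j. j dvd N}. moebius_mu (N div j)) +
               (\<Sum>j\<in>{j. j dvd N}. if r dvd j then moebius_mu (N div j) * (int nu - 1) else 0)"
      by (rule sum.distrib)
    also have "(\<Sum>j\<in>{j. j dvd N}. if r dvd j then moebius_mu (N div j) * (int nu - 1) else 0)
             = (\<Sum>j\<in>{j. j dvd N \<and> r dvd j}. moebius_mu (N div j)) * (int nu - 1)"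
    proof -
      have fin: "finite {j. j dvd N}" using N0 by simp
      have "(\<Sum>j\<in>{j. j dvd N}. if r dvd j then moebius_mu (N div j) * (int nu - 1) else 0)
          = (\<Sum>j\<in>{j \<in> {j. j dvd N}. r dvd j}. moebius_mu (N div j) * (int nu - 1))"
        by (rule sum.inter_filter[OF fin, symmetric])
      also have "{j \<in> {j. j dvd N}. r dvd j} = {j. j dvd N \<and> r dvd j}" by blast
      finally show ?thesis by (simp add: sum_distrib_right)
    qed
    also have "(\<Sum>j\<in>{j. j dvd N \<and> r dvd j}. moebius_mu (N div j)) = (if N = r then 1 else 0)"
      using mu_sum_multiples r1 N0 by simp
    finally have Veq: "V = (if N = 1 then 1 else 0) + (if N = r then 1 else 0) * (int nu - 1)"
      using M1 by simp
    show ?thesis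
    proof (intro conjI impI)
      assume "N = 1"
      then show "V \<ge> 1" using Veq nu2 by auto
    next
      assume N1: "N \<noteq> 1"
      show "V = 0 \<or> V \<ge> 2"
      proof (cases "N = r")
        case False then show ?thesis using Veq N1 by simp
      next
        case True
        then have r2: "r \<ge> 2" using N1 r1 by simp
        have l1: "?l \<noteq> 1" using rdvd[of 1] r2 by auto
        have "H \<currency> 2 = 0" unfolding H_def
          by (rule fit_2_root[OF G0 r1]) (use rdvd l1 in auto)
        then have "(H - fps_X) \<currency> 2 = 0" by simp
        moreover have "(H - fps_X) \<currency> nu \<noteq> 0" unfolding nu_def
          by (rule nth_subdegree_nonzero) (use HX in simp)
        ultimately have "nu \<noteq> 2" by auto
        then have "nu \<ge> 3" using nu2 by simp
        then show ?thesis using Veq True N1 by simp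
      qed
    qed
  qed
qed



notation fps_nth (infixl "\<currency>" 75)

lemma funpow_fixed: "g x = x \<Longrightarrow> (g ^^ j) x = x"
  by (induction j) auto

context dyn
begin

definition ordsum :: "nat \<Rightarrow> 'k alg_closure \<Rightarrow> int" where
  "ordsum n a = (\<Sum>d\<in>{d. d dvd n}. moebius_mu (n div d) * int (order a (acp (gd d))))"

lemma fixed_mult:
  assumes "(phi_P1 p q ^^ m) x = x"
  shows "(phi_P1 p q ^^ (m * j)) x = x"
  using funpow_fixed[of "phi_P1 p q ^^ m" x j] assms by (simp add: funpow_mult)

lemma Tl_fit:
  assumes m: "m \<ge> 1" and fm: "(phi_P1 p q ^^ m) (Some a) = Some a" and j: "j \<ge> 1"
  shows "Tl a (m * j) = fit (Tl a m) j"
  using j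
proof (induction j rule: dec_induct)
  case base
  show ?case using fit_one[OF Tl_0[OF m fm]] by simp
next
  case (step j)
  have mj: "m * j \<ge> 1" using m step.hyps by simp
  have "Tl a (m * Suc j) = Tl a (m * j + m)" by (simp add: add.commute)
  also have "\<dots> = Tl a (m * j) oo Tl a m"
    by (rule Tl_comp[OF mj m fixed_mult[OF fm] fm])
  finally show ?case using step.IH by simp
qed

lemma Tl_ne_X:
  assumes "d \<ge> 1" "(phi_P1 p q ^^ d) (Some a) = Some a" "gd d \<noteq> 0"
  shows "Tl a d \<noteq> fps_X"
proof
  assume T: "Tl a d = fps_X"
  note qa = fixed_pt(1)[OF assms(1,2)]
  have "E a (acp (gd d)) = (fps_const a + fps_X) * E a (acp (qd d)) - E a (acp (pd d))"
    unfolding acp_gd by (simp only: E_diff E_mult E_X)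
  also have "\<dots> = E a (acp (qd d)) * (fps_X - Tl a d)"
    using Tl_eq[OF qa] by (simp add: algebra_simps)
  finally have "E a (acp (gd d)) = 0" using T by simp
  then show False using assms(3) by simp
qed

lemma ordsum_main:
  assumes n1: "n \<ge> 1" and gnz: "\<forall>d. d dvd n \<longrightarrow> gd d \<noteq> 0"
  shows "(periodic_point p q n (Some a) \<longrightarrow> ordsum n a \<ge> 1) \<and>
         (\<not> periodic_point p q n (Some a) \<longrightarrow> ordsum n a = 0 \<or> ordsum n a \<ge> 2)"
proof -
  let ?F = "phi_P1 p q"
  let ?e = "\<lambda>d. order a (acp (gd d))"
  have n0: "n > 0" using n1 by simp
  have fin: "finite {d. d dvd n}" using n0 by simp
  have dpos: "d \<ge> 1" if "d dvd n" for d using that n0 by (cases d) auto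
  have e0: "?e d = 0" if "d \<ge> 1" "(?F ^^ d) (Some a) \<noteq> Some a" for d
    using fix_iff[OF that(1)] that(2) by (intro order_0I) simp
  show ?thesis
  proof (cases "\<exists>d. d dvd n \<and> (?F ^^ d) (Some a) = Some a")
    case False
    have "ordsum n a = 0" unfolding ordsum_def
      by (rule sum.neutral) (use False e0 dpos in auto)
    moreover have "\<not> periodic_point p q n (Some a)"
      using False by (auto simp: periodic_point_def)
    ultimately show ?thesis by simp
  next
    case True
    then obtain d0 where d0: "d0 dvd n" "(?F ^^ d0) (Some a) = Some a" by blast
    obtain m where m1: "m \<ge> 1" and fm: "(?F ^^ m) (Some a) = Some a"
      and mmin: "\<forall>k. 1 \<le> k \<and> k < m \<longrightarrow> (?F ^^ k) (Some a) \<noteq> Some a"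
      using least_period[OF dpos[OF d0(1)] d0(2)] by blast
    note pst = period_structure[OF m1 fm mmin]
    have mn: "m dvd n" using pst d0 dvd_trans by blast
    define N where "N = n div m"
    have nmN: "n = m * N" using mn by (simp add: N_def)
    have N1: "N \<ge> 1" using nmN n1 by (cases N) auto
    define G where "G = Tl a m"
    have G0: "G \<currency> 0 = 0" unfolding G_def by (rule Tl_0[OF m1 fm])
    have "ordsum n a = (\<Sum>d\<in>{d. d dvd n}. if m dvd d then moebius_mu (n div d) * int (?e d) else 0)"
      unfolding ordsum_def
    proof (rule sum.cong[OF refl])
      fix d assume "d \<in> {d. d dvd n}"
      then have "d \<ge> 1" using dpos by simp
      then show "moebius_mu (n div d) * int (?e d) = (if m dvd d then moebius_mu (n div d) * int (?e d) else 0)"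
        using e0 pst by auto
    qed
    also have "\<dots> = (\<Sum>d\<in>{d \<in> {d. d dvd n}. m dvd d}. moebius_mu (n div d) * int (?e d))"
      by (rule sum.inter_filter[OF fin, symmetric])
    also have "{d \<in> {d. d dvd n}. m dvd d} = {d. d dvd n \<and> m dvd d}" by blast
    also have "(\<Sum>d\<in>{d. d dvd n \<and> m dvd d}. moebius_mu (n div d) * int (?e d))
             = (\<Sum>j\<in>{j. j dvd N}. moebius_mu (n div (m * j)) * int (?e (m * j)))"
      unfolding N_def by (rule sum_dvd_mult_reindex) (use m1 mn n0 in auto)
    also have "\<dots> = (\<Sum>j\<in>{j. j dvd N}. moebius_mu (N div j) * int (subdegree (fps_X - fit G j)))"
    proof (rule sum.cong[OF refl])
      fix j assume "j \<in> {j. j dvd N}"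
      then have jN: "j dvd N" by simp
      have j1: "j \<ge> 1" using jN N1 by (cases j) auto
      have mj1: "m * j \<ge> 1" using m1 j1 by simp
      have fmj: "(?F ^^ (m * j)) (Some a) = Some a" using fixed_mult[OF fm] .
      have gmj: "gd (m * j) \<noteq> 0" using gnz jN nmN by (simp add: mult_dvd_mono)
      have "?e (m * j) = subdegree (fps_X - Tl a (m * j))" by (rule order_Tl[OF mj1 fmj gmj])
      also have "\<dots> = subdegree (fps_X - fit G j)" unfolding G_def using Tl_fit[OF m1 fm j1] by simp
      finally have "?e (m * j) = subdegree (fps_X - fit G j)" .
      moreover have "n div (m * j) = N div j" by (simp add: N_def div_mult2_eq)
      ultimately show "moebius_mu (n div (m * j)) * int (?e (m * j)) =
                       moebius_mu (N div j) * int (subdegree (fps_X - fit G j))" by simp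
    qed
    finally have os: "ordsum n a = (\<Sum>j\<in>{j. j dvd N}. moebius_mu (N div j) * int (subdegree (fps_X - fit G j)))" .
    have nz: "\<forall>j. j dvd N \<longrightarrow> fit G j \<noteq> fps_X"
    proof (intro allI impI)
      fix j assume jN: "j dvd N"
      have j1: "j \<ge> 1" using jN N1 by (cases j) auto
      have mj1: "m * j \<ge> 1" using m1 j1 by simp
      have gmj: "gd (m * j) \<noteq> 0" using gnz jN nmN by (simp add: mult_dvd_mono)
      have "Tl a (m * j) \<noteq> fps_X" by (rule Tl_ne_X[OF mj1 fixed_mult[OF fm] gmj])
      then show "fit G j \<noteq> fps_X" unfolding G_def using Tl_fit[OF m1 fm j1] by simp
    qed
    have per: "periodic_point p q n (Some a) \<longleftrightarrow> N = 1"
    proof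
      assume P: "periodic_point p q n (Some a)"
      then have "m \<ge> n" using m1 fm unfolding periodic_point_def by (meson not_le)
      moreover have "m \<le> n" using mn n0 by (simp add: dvd_imp_le)
      ultimately have "m = n" by simp
      then show "N = 1" using nmN n0 by simp
    next
      assume "N = 1"
      then have "m = n" using nmN by simp
      then show "periodic_point p q n (Some a)" using m1 fm mmin by (simp add: periodic_point_def)
    qed
    show ?thesis using fps_mobius[OF G0 N1 nz] os per by simp
  qed
qed

lemma ordsum_nonneg:
  assumes "n \<ge> 1" "\<forall>d. d dvd n \<longrightarrow> gd d \<noteq> 0"
  shows "ordsum n a \<ge> 0"
  using ordsum_main[OF assms, of a] by auto

end

lemma subfield_UNIV: "is_subfield UNIV"
  by (simp add: is_subfield_def)

lemma gen_field_subfield: "is_subfield (gen_field S)"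
  unfolding gen_field_def is_subfield_def by auto

lemma gen_field_incl: "S \<subseteq> gen_field S"
  unfolding gen_field_def by auto

lemma gen_field_least: "is_subfield F \<Longrightarrow> S \<subseteq> F \<Longrightarrow> gen_field S \<subseteq> F"
  unfolding gen_field_def by auto

lemma gen_field_mono: "S \<subseteq> T \<Longrightarrow> gen_field S \<subseteq> gen_field T"
  by (meson gen_field_incl gen_field_least gen_field_subfield order_trans)

lemma order_prod:
  fixes f :: "'b \<Rightarrow> 'a::idom poly"
  assumes "finite A" "\<forall>x\<in>A. f x \<noteq> 0"
  shows "order a (prod f A) = (\<Sum>x\<in>A. order a (f x))"
  using assms
proof (induction A rule: finite_induct)
  case (insert x A)
  have "prod f A \<noteq> 0" using insert by auto
  then have "f x * prod f A \<noteq> 0" using insert by auto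
  then show ?case using insert by (simp add: order_mult)
qed simp

lemma dvd_by_order:
  fixes f g :: "'a::{alg_closed_field} poly"
  assumes "f \<noteq> 0" "g \<noteq> 0" "\<forall>a. order a f \<le> order a g"
  shows "f dvd g"
  using assms
proof (induction "degree f" arbitrary: f g rule: less_induct)
  case less
  show ?case
  proof (cases "degree f = 0")
    case True
    then obtain c where "f = [:c:]" by (metis degree_eq_zeroE)
    then have "is_unit f" using less.prems(1) by (simp add: is_unit_poly_iff)
    then show ?thesis by (simp add: unit_imp_dvd)
  next
    case False
    obtain a where a: "poly f a = 0" using alg_closed_imp_poly_has_root[of f] False by auto
    obtain f1 where f1: "f = [:- a, 1:] * f1" using a by (metis poly_eq_0_iff_dvd dvdE)
    have "order a f \<ge> 1" using a less.prems(1) order_root by (metis less_one not_le)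
    then have "order a g \<ge> 1" using less.prems(3) order_trans by blast
    then have "poly g a = 0" using order_root by (metis not_one_le_zero)
    then obtain g1 where g1: "g = [:- a, 1:] * g1" by (metis poly_eq_0_iff_dvd dvdE)
    have f10: "f1 \<noteq> 0" using f1 less.prems(1) by auto
    have g10: "g1 \<noteq> 0" using g1 less.prems(2) by auto
    have "order b f1 \<le> order b g1" for b
    proof -
      have "order b f = order b [:- a, 1:] + order b f1"
        using less.prems(1) unfolding f1 by (rule order_mult)
      moreover have "order b g = order b [:- a, 1:] + order b g1"
        using less.prems(2) unfolding g1 by (rule order_mult)
      ultimately show ?thesis using less.prems(3) by (metis add_le_cancel_left)
    qed
    moreover have "degree f1 < degree f"
    proof -
      have "degree ([:- a, 1:] * f1) = degree [:- a, 1:] + degree f1"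
        by (rule degree_mult_eq) (use f10 in auto)
      then show ?thesis unfolding f1 by simp
    qed
    ultimately have "f1 dvd g1" using less.hyps f10 g10 by blast
    then have "[:- a, 1:] * f1 dvd [:- a, 1:] * g1" by (rule mult_dvd_mono[OF dvd_refl])
    then show ?thesis unfolding f1 g1 .
  qed
qed

lemma mu_cases: "moebius_mu k = 1 \<or> moebius_mu k = -1 \<or> moebius_mu k = 0"
  by (simp add: moebius_mu_def minus_one_power_iff)

lemma mu_one: "moebius_mu 1 = 1"
  by (simp add: moebius_mu_def)

lemma mu_one': "moebius_mu (Suc 0) = 1"
  using mu_one by simp

lemma to_fract_prod: "to_fract (prod f A) = (\<Prod>x\<in>A. to_fract (f x))"
  by (induction A rule: infinite_finite_induct) auto

lemma disc_nz_res:
  assumes "poly_discriminant f \<noteq> 0"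
  shows "resultant f (pderiv f) \<noteq> 0"
  using assms by (auto simp: poly_discriminant_def)

context dyn
begin

lemma gd_nz:
  assumes n1: "n \<ge> 1" and disc: "poly_discriminant (dynatomic_poly pd qd n) \<noteq> 0"
  shows "\<forall>d. d dvd n \<longrightarrow> gd d \<noteq> 0"
proof (rule ccontr)
  assume "\<not> ?thesis"
  then obtain d where d: "d dvd n" "gd d = 0" by blast
  have d1: "d \<ge> 1" using d(1) n1 by (cases d) auto
  have "(phi_P1 p q ^^ d) (Some a) = Some a" for a using fix_iff[OF d1] d(2) by simp
  then have "(phi_P1 p q ^^ n) (Some a) = Some a" for a
    using fixed_mult d(1) by (metis dvdE)
  then have "poly (acp (gd n)) a = 0" for a using fix_iff[OF n1] by blast
  then have "acp (gd n) = 0" using poly_zero_cofinite[of "{}"] by blast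
  then have gn: "gd n = 0" by simp
  have "dynatomic_fract pd qd n = 0"
    unfolding dynatomic_fract_def
  proof (rule prod_zero)
    show "finite {d. d dvd n}" using n1 by simp
    show "\<exists>d\<in>{d. d dvd n}. to_fract ([:0, 1:] * qd d - pd d) powi moebius_mu (n div d) = 0"
      using gn n1 by (intro bexI[of _ n]) (auto simp: gd_def mu_one')
  qed
  then have "dynatomic_poly pd qd n = 0"
    unfolding dynatomic_poly_def by (intro the_equality) auto
  then show False using disc by (simp add: poly_discriminant_def)
qed

definition A1 :: "nat \<Rightarrow> nat set" where
  "A1 n = {d. d dvd n \<and> moebius_mu (n div d) = 1}"
definition Am :: "nat \<Rightarrow> nat set" where
  "Am n = {d. d dvd n \<and> moebius_mu (n div d) = -1}"
definition Num :: "nat \<Rightarrow> 'k poly" where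
  "Num n = (\<Prod>d\<in>A1 n. gd d)"
definition Den :: "nat \<Rightarrow> 'k poly" where
  "Den n = (\<Prod>d\<in>Am n. gd d)"

lemma fin_A: "n \<ge> 1 \<Longrightarrow> finite (A1 n) \<and> finite (Am n)"
  unfolding A1_def Am_def by auto

lemma fract_split:
  assumes n1: "n \<ge> 1"
  shows "dynatomic_fract pd qd n = to_fract (Num n) * inverse (to_fract (Den n))"
proof -
  let ?X = "\<lambda>d. to_fract (gd d)"
  have fin: "finite {d. d dvd n}" using n1 by simp
  have "dynatomic_fract pd qd n = (\<Prod>d\<in>{d. d dvd n}. ?X d powi moebius_mu (n div d))"
    unfolding dynatomic_fract_def gd_def ..
  also have "\<dots> = (\<Prod>d\<in>{d. d dvd n}. (if moebius_mu (n div d) = 1 then ?X d else 1) *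
                                     (if moebius_mu (n div d) = -1 then inverse (?X d) else 1))"
  proof (rule prod.cong[OF refl])
    fix d
    show "?X d powi moebius_mu (n div d) = (if moebius_mu (n div d) = 1 then ?X d else 1) *
                                     (if moebius_mu (n div d) = -1 then inverse (?X d) else 1)"
      using mu_cases[of "n div d"] by (elim disjE) simp_all
  qed
  also have "\<dots> = (\<Prod>d\<in>{d. d dvd n}. if moebius_mu (n div d) = 1 then ?X d else 1) *
                   (\<Prod>d\<in>{d. d dvd n}. if moebius_mu (n div d) = -1 then inverse (?X d) else 1)"
    by (rule prod.distrib)
  also have "(\<Prod>d\<in>{d. d dvd n}. if moebius_mu (n div d) = 1 then ?X d else 1) = (\<Prod>d\<in>A1 n. ?X d)"
  proof -
    have e: "{x \<in> {d. d dvd n}. moebius_mu (n div x) = 1} = A1 n" by (auto simp: A1_def)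
    show ?thesis using prod.inter_filter[OF fin, of ?X "\<lambda>d. moebius_mu (n div d) = 1"] unfolding e by simp
  qed
  also have "(\<Prod>d\<in>{d. d dvd n}. if moebius_mu (n div d) = -1 then inverse (?X d) else 1)
           = (\<Prod>d\<in>Am n. inverse (?X d))"
  proof -
    have e: "{x \<in> {d. d dvd n}. moebius_mu (n div x) = -1} = Am n" by (auto simp: Am_def)
    show ?thesis using prod.inter_filter[OF fin, of "\<lambda>d. inverse (?X d)" "\<lambda>d. moebius_mu (n div d) = -1"]
      unfolding e by simp
  qed
  also have "(\<Prod>d\<in>Am n. inverse (?X d)) = inverse (\<Prod>d\<in>Am n. ?X d)"
    using prod_inversef[of ?X "Am n"] by (simp add: comp_def)
  finally show ?thesis unfolding Num_def Den_def by (simp add: to_fract_prod)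
qed

lemma ordsum_split:
  assumes n1: "n \<ge> 1"
  shows "ordsum n a = (\<Sum>d\<in>A1 n. int (order a (acp (gd d)))) - (\<Sum>d\<in>Am n. int (order a (acp (gd d))))"
proof -
  let ?e = "\<lambda>d. int (order a (acp (gd d)))"
  have fin: "finite {d. d dvd n}" using n1 by simp
  have "ordsum n a = (\<Sum>d\<in>{d. d dvd n}. (if moebius_mu (n div d) = 1 then ?e d else 0) -
                                     (if moebius_mu (n div d) = -1 then ?e d else 0))"
    unfolding ordsum_def
  proof (rule sum.cong[OF refl])
    fix d
    show "moebius_mu (n div d) * ?e d = (if moebius_mu (n div d) = 1 then ?e d else 0) -
                                     (if moebius_mu (n div d) = -1 then ?e d else 0)"
      using mu_cases[of "n div d"] by (elim disjE) simp_all
  qed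
  also have "\<dots> = (\<Sum>d\<in>{d. d dvd n}. if moebius_mu (n div d) = 1 then ?e d else 0) -
                   (\<Sum>d\<in>{d. d dvd n}. if moebius_mu (n div d) = -1 then ?e d else 0)"
    by (rule sum_subtractf)
  also have "(\<Sum>d\<in>{d. d dvd n}. if moebius_mu (n div d) = 1 then ?e d else 0) = (\<Sum>d\<in>A1 n. ?e d)"
  proof -
    have e: "{x \<in> {d. d dvd n}. moebius_mu (n div x) = 1} = A1 n" by (auto simp: A1_def)
    show ?thesis using sum.inter_filter[OF fin, of ?e "\<lambda>d. moebius_mu (n div d) = 1"] unfolding e by simp
  qed
  also have "(\<Sum>d\<in>{d. d dvd n}. if moebius_mu (n div d) = -1 then ?e d else 0) = (\<Sum>d\<in>Am n. ?e d)"
  proof -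
    have e: "{x \<in> {d. d dvd n}. moebius_mu (n div x) = -1} = Am n" by (auto simp: Am_def)
    show ?thesis using sum.inter_filter[OF fin, of ?e "\<lambda>d. moebius_mu (n div d) = -1"] unfolding e by simp
  qed
  finally show ?thesis .
qed

context
  fixes n :: nat
  assumes n1: "n \<ge> 1" and disc: "poly_discriminant (dynatomic_poly pd qd n) \<noteq> 0"
begin

lemma gnz: "\<forall>d. d dvd n \<longrightarrow> gd d \<noteq> 0"
  using gd_nz[OF n1 disc] .

lemma Num_nz: "Num n \<noteq> 0" and Den_nz: "Den n \<noteq> 0"
  using gnz fin_A[OF n1] unfolding Num_def Den_def A1_def Am_def by auto

lemma order_Num: "order a (acp (Num n)) = (\<Sum>d\<in>A1 n. order a (acp (gd d)))"
  unfolding Num_def acp_prod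
  by (rule order_prod) (use fin_A[OF n1] gnz in \<open>auto simp: A1_def\<close>)

lemma order_Den: "order a (acp (Den n)) = (\<Sum>d\<in>Am n. order a (acp (gd d)))"
  unfolding Den_def acp_prod
  by (rule order_prod) (use fin_A[OF n1] gnz in \<open>auto simp: Am_def\<close>)

lemma ordsum_ND: "ordsum n a = int (order a (acp (Num n))) - int (order a (acp (Den n)))"
  unfolding ordsum_split[OF n1] order_Num order_Den by simp

lemma Den_dvd: "Den n dvd Num n"
proof -
  have "acp (Den n) dvd acp (Num n)"
  proof (rule dvd_by_order)
    show "acp (Den n) \<noteq> 0" "acp (Num n) \<noteq> 0" using Num_nz Den_nz by auto
    show "\<forall>a. order a (acp (Den n)) \<le> order a (acp (Num n))"
    proof
      fix a
      show "order a (acp (Den n)) \<le> order a (acp (Num n))"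
        using ordsum_nonneg[OF n1 gnz, of a] ordsum_ND[of a] by linarith
    qed
  qed
  then show ?thesis by (rule ac.dvd_map_poly_hom_imp_dvd)
qed

definition Phi :: "'k poly" where "Phi = Num n div Den n"

lemma Num_eq: "Num n = Den n * Phi"
  unfolding Phi_def using Den_dvd by simp

lemma Phi_nz: "Phi \<noteq> 0"
  using Num_eq Num_nz by auto

lemma dyn_poly_eq: "dynatomic_poly pd qd n = Phi"
proof -
  have h: "to_fract Phi = dynatomic_fract pd qd n"
  proof -
    have "to_fract (Num n) = to_fract (Den n) * to_fract Phi" using Num_eq by simp
    then have "to_fract Phi = to_fract (Num n) * inverse (to_fract (Den n))"
      using Den_nz by (simp add: field_simps)
    then show ?thesis using fract_split[OF n1] by simp
  qed
  show ?thesis unfolding dynatomic_poly_def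
  proof (rule the_equality)
    show "to_fract Phi = dynatomic_fract pd qd n" by (rule h)
  next
    fix P assume "to_fract P = dynatomic_fract pd qd n"
    then have "to_fract P = to_fract Phi" using h by simp
    then show "P = Phi" by simp
  qed
qed

lemma order_Phi: "int (order a (acp Phi)) = ordsum n a"
proof -
  have "acp (Num n) = acp (Den n) * acp Phi" using Num_eq by simp
  moreover have "acp (Den n) * acp Phi \<noteq> 0" using Den_nz Phi_nz by simp
  ultimately have "order a (acp (Num n)) = order a (acp (Den n)) + order a (acp Phi)"
    by (simp add: order_mult)
  then show ?thesis using ordsum_ND by simp
qed

lemma order_Phi_le1: "order a (acp Phi) \<le> 1"
proof (rule ccontr)
  assume o2: "\<not> order a (acp Phi) \<le> 1"
  let ?P = "acp Phi"
  have P0: "?P \<noteq> 0" using Phi_nz by simp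
  have r0: "resultant Phi (pderiv Phi) \<noteq> 0" using disc_nz_res disc dyn_poly_eq by simp
  have "resultant ?P (pderiv ?P) = to_ac (resultant Phi (pderiv Phi))"
    using ac.resultant_hom[of Phi "pderiv Phi"] by (simp add: ac.map_poly_pderiv)
  then have "resultant ?P (pderiv ?P) \<noteq> 0" using r0 by simp
  then have g0: "degree (gcd ?P (pderiv ?P)) = 0" using resultant_0_gcd by blast
  have root: "poly ?P a = 0"
  proof (rule ccontr)
    assume "poly ?P a \<noteq> 0"
    then have "order a ?P = 0" by (rule order_0I)
    then show False using o2 by simp
  qed
  have "order a ?P = Suc (order a (pderiv ?P))" by (rule order_pderiv[OF P0 root])
  then have "order a (pderiv ?P) \<noteq> 0" using o2 by simp
  then have root': "poly (pderiv ?P) a = 0" using order_root by blast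
  have "[:- a, 1:] dvd ?P" "[:- a, 1:] dvd pderiv ?P" using root root' by (simp_all add: poly_eq_0_iff_dvd)
  then have dg: "[:- a, 1:] dvd gcd ?P (pderiv ?P)" by simp
  have "gcd ?P (pderiv ?P) \<noteq> 0" using P0 by simp
  then have "degree [:- a, 1:] \<le> degree (gcd ?P (pderiv ?P))" by (rule dvd_imp_degree_le[OF dg])
  then show False using g0 by simp
qed

lemma roots_Phi: "poly (acp Phi) a = 0 \<longleftrightarrow> periodic_point p q n (Some a)"
proof -
  have P0: "acp Phi \<noteq> 0" using Phi_nz by simp
  note om = ordsum_main[OF n1 gnz, of a]
  have "poly (acp Phi) a = 0 \<longleftrightarrow> order a (acp Phi) \<noteq> 0" using P0 order_root by blast
  also have "\<dots> \<longleftrightarrow> ordsum n a = 1" using order_Phi[of a] order_Phi_le1[of a] by auto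
  also have "\<dots> \<longleftrightarrow> periodic_point p q n (Some a)"
    using om order_Phi[of a] order_Phi_le1[of a] by auto
  finally show ?thesis .
qed

end

lemma dynatomic_field_eq:
  "dynatomic_field p q n = gen_field (base_field \<union> {a. periodic_point p q n (Some a)})"
proof -
  let ?A = "{a. periodic_point p q n (Some a)}"
  let ?U = "base_field \<union> \<Union> {field_of_def P | P. periodic_point p q n P}"
  have "?U \<subseteq> gen_field (base_field \<union> ?A)"
  proof
    fix x assume "x \<in> ?U"
    then show "x \<in> gen_field (base_field \<union> ?A)"
    proof
      assume "x \<in> base_field"
      then show ?thesis using gen_field_incl by blast
    next
      assume "x \<in> \<Union> {field_of_def P | P. periodic_point p q n P}"
      then obtain P where P: "periodic_point p q n P" "x \<in> field_of_def P" by blast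
      show ?thesis
      proof (cases P)
        case None
        then have "x \<in> gen_field base_field" using P by (simp add: field_of_def_def)
        moreover have "gen_field base_field \<subseteq> gen_field (base_field \<union> ?A)"
          by (rule gen_field_mono) blast
        ultimately show ?thesis by blast
      next
        case (Some a)
        then have "x \<in> gen_field (insert a base_field)" using P by (simp add: field_of_def_def)
        moreover have "gen_field (insert a base_field) \<subseteq> gen_field (base_field \<union> ?A)"
          by (rule gen_field_mono) (use P Some in blast)
        ultimately show ?thesis by blast
      qed
    qed
  qed
  then have le: "gen_field ?U \<subseteq> gen_field (base_field \<union> ?A)"
    by (rule gen_field_least[OF gen_field_subfield])
  have "base_field \<union> ?A \<subseteq> ?U"
  proof
    fix x assume "x \<in> base_field \<union> ?A"
    then show "x \<in> ?U"
    proof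
      assume "x \<in> ?A"
      then have "periodic_point p q n (Some x)" by simp
      moreover have "x \<in> field_of_def (Some x)"
        using gen_field_incl[of "insert x base_field"] by (simp add: field_of_def_def)
      ultimately show ?thesis by blast
    qed simp
  qed
  then have "gen_field (base_field \<union> ?A) \<subseteq> gen_field ?U" by (rule gen_field_mono)
  then show ?thesis unfolding dynatomic_field_def using le by blast
qed

end

theorem lemma2p7:
  fixes p q :: "'k :: field_char_0 poly"
    and pd qd :: "nat \<Rightarrow> 'k poly"
    and n :: nat
  assumes "nonconst_ratfun p q"
    and "iterate_reps p q pd qd"
    and "n \<ge> 1"
    and "poly_discriminant (dynatomic_poly pd qd n) \<noteq> 0"
  shows "galois_group (dynatomic_field p q n) = poly_galois_group (dynatomic_poly pd qd n)"
proof -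
  interpret dyn p q pd qd by unfold_locales (rule assms(1), rule assms(2))
  have roots: "{x. poly (map_poly to_ac (dynatomic_poly pd qd n)) x = 0} = {a. periodic_point p q n (Some a)}"
    using dyn_poly_eq[OF assms(3,4)] roots_Phi[OF assms(3,4)] by auto
  have "dynatomic_field p q n = splitting_field (dynatomic_poly pd qd n)"
    unfolding dynatomic_field_eq splitting_field_def roots ..
  then show ?thesis by (simp add: poly_galois_group_def)
qed


end
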